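(* Let $\mathcal P(\boldsymbol\alpha,\boldsymbol\ell)$ and $\mathcal P'(\boldsymbol\alpha,\boldsymbol\ell')$ be two curvilinear $n$-gons with the same angles $\boldsymbol\alpha$ and side lengths satisfying $\ell_i\le\ell_i'$ for all $i=1,\dots,n$. Then their quasi-eigenvalues satisfy $\sigma_m\ge\sigma_m'$ for all $m\ge1$.
   Context: A curvilinear polygon $\mathcal P(\boldsymbol\alpha,\boldsymbol\ell)$: bounded simply connected planar domain bounded by $n$ smooth arcs $I_j$ of lengths $\ell_j>0$, vertices $V_1,\dots,V_n$ clockwise (cyclic indices), $I_j$ from $V_{j-1}$ to $V_j$, interior angle $\alpha_j\in(0,\pi)$ at $V_j$. $\mathcal E=\{\pi/(2k):k\in\mathbb N\}$, $\mathcal O(\pi/(2k))=(-1)^k$. For $\alpha\notin\mathcal E$, $\mathtt A(\alpha)=\begin{pmatrix}\csc\frac{\pi^2}{2\alpha}&-i\cot\frac{\pi^2}{2\alpha}\\ i\cot\frac{\pi^2}{2\alpha}&\csc\frac{\pi^2}{2\alpha}\end{pmatrix}$, $\mathtt B(\ell,\sigma)=\operatorname{diag}(e^{i\ell\sigma},e^{-i\ell\sigma})$. Quasi-eigenvalues $\sigma_1\le\sigma_2\le\dots$ (with multiplicity): if no angle is exceptional, $\sigma\ge0$ is one iff $1$ is an eigenvalue of $\mathtt T(\sigma)=\mathtt A(\alpha_n)\mathtt B(\ell_n,\sigma)\cdots\mathtt A(\alpha_1)\mathtt B(\ell_1,\sigma)$, with multiplicity the geometric multiplicity for $\sigma>0$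 and $1$ for $\sigma=0$. Otherwise, with exceptional vertices $V_{E_1},\dots,V_{E_K}$, $1\le E_1<\dots<E_K=n$, $E_0:=E_K$, let $\mathtt U_\kappa(\sigma)=\mathtt B(\ell_{E_\kappa},\sigma)\mathtt A(\alpha_{E_\kappa-1})\cdots\mathtt A(\alpha_{E_{\kappa-1}+1})\mathtt B(\ell_{E_{\kappa-1}+1},\sigma)$ (indices mod $n$), $\mathbf X_{\rm even}=\frac1{\sqrt2}(e^{-i\pi/4},e^{i\pi/4})^T$, $\mathbf X_{\rm odd}=\frac1{\sqrt2}(e^{i\pi/4},e^{-i\pi/4})^T$, $\mathbf X(\alpha)=\mathbf X_{\rm even}$ if $\mathcal O(\alpha)=1$ else $\mathbf X_{\rm odd}$, $u\cdot v=u_1\bar v_1+u_2\bar v_2$; $\sigma\ge0$ is a quasi-eigenvalue iff $\mathtt U_\kappa(\sigma)\mathbf X(\alpha_{E_{\kappa-1}})\cdot\mathbf X(\alpha_{E_\kappa})=0$ for some $\kappa$, multiplicity of $\sigma>0$ the number of such $\kappa$, multiplicity of $0$ half the number of $\kappa$ with $\mathcal O(\alpha_{E_{\kappa-1}})\ne\mathcal O(\alpha_{E_\kappa})$. *)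

theory Defs
  imports "HOL-Analysis.Analysis"
begin

type_synonym cmat2 = "complex^2^2"
type_synonym cvec2 = "complex^2"

definition mat2 :: "complex \<Rightarrow> complex \<Rightarrow> complex \<Rightarrow> complex \<Rightarrow> cmat2" where
  "mat2 a b c d = (\<chi> i j. if i = 1 then (if j = 1 then a else b) else (if j = 1 then c else d))"

definition vec2 :: "complex \<Rightarrow> complex \<Rightarrow> cvec2" where
  "vec2 a b = (\<chi> i. if i = 1 then a else b)"

definition herm :: "cvec2 \<Rightarrow> cvec2 \<Rightarrow> complex" where
  "herm u v = (\<Sum>i\<in>UNIV. u $ i * cnj (v $ i))"

definition exceptional :: "real \<Rightarrow> bool" where
  "exceptional a \<longleftrightarrow> (\<exists>k::nat. k \<ge> 1 \<and> a = pi / (2 * real k))"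

text \<open>Parity O(pi/(2k)) = (-1)^k (only meaningful on exceptional angles).\<close>
definition parityO :: "real \<Rightarrow> int" where
  "parityO a = (-1) ^ (THE k::nat. k \<ge> 1 \<and> a = pi / (2 * real k))"

definition matA :: "real \<Rightarrow> cmat2" where
  "matA a = (let t = pi ^ 2 / (2 * a) in
     mat2 (complex_of_real (1 / sin t)) (- \<i> * complex_of_real (cot t))
          (\<i> * complex_of_real (cot t)) (complex_of_real (1 / sin t)))"

definition matB :: "real \<Rightarrow> real \<Rightarrow> cmat2" where
  "matB l s = mat2 (cis (l * s)) 0 0 (cis (- (l * s)))"

definition Xeven :: cvec2 where
  "Xeven = vec2 (complex_of_real (1 / sqrt 2) * cis (- pi / 4)) (complex_of_real (1 / sqrt 2) * cis (pi / 4))"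

definition Xodd :: cvec2 where
  "Xodd = vec2 (complex_of_real (1 / sqrt 2) * cis (pi / 4)) (complex_of_real (1 / sqrt 2) * cis (- pi / 4))"

definition Xvec :: "real \<Rightarrow> cvec2" where
  "Xvec a = (if parityO a = 1 then Xeven else Xodd)"

definition cyc :: "nat \<Rightarrow> int \<Rightarrow> nat" where
  "cyc n i = nat ((i - 1) mod int n) + 1"

fun prodT :: "(nat \<Rightarrow> real) \<Rightarrow> (nat \<Rightarrow> real) \<Rightarrow> real \<Rightarrow> nat \<Rightarrow> cmat2" where
  "prodT alpha l s 0 = mat 1"
| "prodT alpha l s (Suc j) = matA (alpha (Suc j)) ** matB (l (Suc j)) s ** prodT alpha l s j"

definition matT :: "nat \<Rightarrow> (nat \<Rightarrow> real) \<Rightarrow> (nat \<Rightarrow> real) \<Rightarrow> real \<Rightarrow> cmat2" where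
  "matT n alpha l s = prodT alpha l s n"

definition geom_mult1 :: "cmat2 \<Rightarrow> nat" where
  "geom_mult1 M = vec.dim {v :: cvec2. M *v v = v}"

text \<open>For an exceptional vertex e, prev_dist is the cyclic distance d (1 \<le> d \<le> n)
  back to the previous exceptional vertex  cyc n (e - d)  (equal to e itself if there is only one).\<close>
definition prev_dist :: "nat \<Rightarrow> (nat \<Rightarrow> real) \<Rightarrow> nat \<Rightarrow> nat" where
  "prev_dist n alpha e = (LEAST d. d \<ge> 1 \<and> exceptional (alpha (cyc n (int e - int d))))"

definition prev_exc :: "nat \<Rightarrow> (nat \<Rightarrow> real) \<Rightarrow> nat \<Rightarrow> nat" where
  "prev_exc n alpha e = cyc n (int e - int (prev_dist n alpha e))"

fun prodW :: "nat \<Rightarrow> (nat \<Rightarrow> real) \<Rightarrow> (nat \<Rightarrow> real) \<Rightarrow> real \<Rightarrow> nat \<Rightarrow> nat \<Rightarrow> cmat2" where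
  "prodW n alpha l s e 0 = mat 1"
| "prodW n alpha l s e (Suc k) =
     prodW n alpha l s e k ** matA (alpha (cyc n (int e - int (Suc k))))
       ** matB (l (cyc n (int e - int (Suc k)))) s"

text \<open>U(s) = B(l_e) A(alpha_{e-1}) ... A(alpha_{p+1}) B(l_{p+1}), p the previous exceptional vertex.\<close>
definition matU :: "nat \<Rightarrow> (nat \<Rightarrow> real) \<Rightarrow> (nat \<Rightarrow> real) \<Rightarrow> nat \<Rightarrow> real \<Rightarrow> cmat2" where
  "matU n alpha l e s = matB (l e) s ** prodW n alpha l s e (prev_dist n alpha e - 1)"

definition exc_vertices :: "nat \<Rightarrow> (nat \<Rightarrow> real) \<Rightarrow> nat set" where
  "exc_vertices n alpha = {e \<in> {1..n}. exceptional (alpha e)}"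

definition exc_cond :: "nat \<Rightarrow> (nat \<Rightarrow> real) \<Rightarrow> (nat \<Rightarrow> real) \<Rightarrow> nat \<Rightarrow> real \<Rightarrow> bool" where
  "exc_cond n alpha l e s \<longleftrightarrow>
     herm (matU n alpha l e s *v Xvec (alpha (prev_exc n alpha e))) (Xvec (alpha e)) = 0"

definition qe_mult :: "nat \<Rightarrow> (nat \<Rightarrow> real) \<Rightarrow> (nat \<Rightarrow> real) \<Rightarrow> real \<Rightarrow> nat" where
  "qe_mult n alpha l s =
    (if s < 0 then 0
     else if exc_vertices n alpha = {} then
       (if geom_mult1 (matT n alpha l s) = 0 then 0
        else if s = 0 then 1 else geom_mult1 (matT n alpha l s))
     else if s > 0 then card {e \<in> exc_vertices n alpha. exc_cond n alpha l e s}
     else (if (\<exists>e \<in> exc_vertices n alpha. exc_cond n alpha l e 0)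
           then card {e \<in> exc_vertices n alpha.
                        parityO (alpha (prev_exc n alpha e)) \<noteq> parityO (alpha e)} div 2
           else 0))"

definition qe_count :: "nat \<Rightarrow> (nat \<Rightarrow> real) \<Rightarrow> (nat \<Rightarrow> real) \<Rightarrow> real \<Rightarrow> nat" where
  "qe_count n alpha l s = (\<Sum>t \<in> {t. 0 \<le> t \<and> t \<le> s \<and> qe_mult n alpha l t > 0}. qe_mult n alpha l t)"

text \<open>The m-th quasi-eigenvalue sigma_m (m \<ge> 1) in the non-decreasing enumeration with multiplicity.\<close>
definition qe :: "nat \<Rightarrow> (nat \<Rightarrow> real) \<Rightarrow> (nat \<Rightarrow> real) \<Rightarrow> nat \<Rightarrow> real" where
  "qe n alpha l m = Inf {s. m \<le> qe_count n alpha l s}"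

end

theory Submission
  imports Defs
begin

lemma mat2_mult: "mat2 a b c d ** mat2 a' b' c' d' = mat2 (a*a' + b*c') (a*b' + b*d') (c*a' + d*c') (c*b' + d*d')"
  by (simp add: vec_eq_iff forall_2 sum_2 matrix_matrix_mult_def mat2_def)

lemma mat2_vec2: "mat2 a b c d *v vec2 x y = vec2 (a*x + b*y) (c*x + d*y)"
  by (simp add: vec_eq_iff forall_2 sum_2 matrix_vector_mult_def mat2_def vec2_def)

lemma mat1_eq: "(mat 1 :: cmat2) = mat2 1 0 0 1"
  by (simp add: vec_eq_iff forall_2 mat_def mat2_def)

lemma vec2_eq_iff: "vec2 a b = vec2 c d \<longleftrightarrow> a = c \<and> b = d"
  by (auto simp: vec_eq_iff forall_2 vec2_def)

lemma herm_vec2: "herm (vec2 a b) (vec2 c d) = a * cnj c + b * cnj d"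
  by (simp add: herm_def sum_2 vec2_def)

definition su11 :: "cmat2 \<Rightarrow> bool" where
  "su11 M \<longleftrightarrow> (\<exists>a b. M = mat2 a b (cnj b) (cnj a) \<and> (cmod a)^2 - (cmod b)^2 = 1)"

lemma su11_mult: assumes "su11 M" "su11 N" shows "su11 (M ** N)"
proof -
  obtain a b where M: "M = mat2 a b (cnj b) (cnj a)" "(cmod a)^2 - (cmod b)^2 = 1" using assms(1) su11_def by auto
  obtain c d where N: "N = mat2 c d (cnj d) (cnj c)" "(cmod c)^2 - (cmod d)^2 = 1" using assms(2) su11_def by auto
  have e: "M ** N = mat2 (a*c + b*cnj d) (a*d+b*cnj c) (cnj (a*d+b*cnj c)) (cnj (a*c + b*cnj d))"
    by (simp add: M N mat2_mult algebra_simps)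
  have "(cmod (a*c + b*cnj d))^2 - (cmod (a*d+b*cnj c))^2 = ((cmod a)^2 - (cmod b)^2) * ((cmod c)^2 - (cmod d)^2)"
  proof -
    have h: "\<And>z::complex. (cmod z)^2 = Re (z * cnj z)" by (simp add: complex_mult_cnj cmod_def power2_eq_square)
    show ?thesis unfolding h by (simp add: algebra_simps power2_eq_square)
  qed
  then show ?thesis unfolding su11_def e using M N by (intro exI[of _ "a*c + b*cnj d"] exI[of _ "a*d+b*cnj c"]) simp
qed

lemma su11_one: "su11 (mat 1)"
  unfolding su11_def mat1_eq by (rule exI[of _ 1], rule exI[of _ 0]) simp

lemma su11_B: "su11 (matB l s)"
  unfolding su11_def matB_def by (rule exI[of _ "cis (l * s)"], rule exI[of _ 0]) (simp add: cis_cnj)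

lemma su11_A: assumes "sin (pi^2/(2*a)) \<noteq> 0" shows "su11 (matA a)"
proof -
  define t where "t = pi^2/(2*a)"
  have st: "sin t \<noteq> 0" using assms t_def by simp
  have "(1 / sin t)^2 - (cot t)^2 = 1"
    using st by (simp add: cot_def field_simps power2_eq_square)
  then show ?thesis unfolding su11_def matA_def Let_def t_def[symmetric]
    apply (rule_tac x="complex_of_real (1 / sin t)" in exI)
    apply (rule_tac x="- \<i> * complex_of_real (cot t)" in exI)
    by (simp add: norm_mult norm_divide power_divide)
qed

lemma su11_vec: "mat2 a b (cnj b) (cnj a) *v vec2 u (cnj u) = vec2 (a*u + b*cnj u) (cnj (a*u + b*cnj u))"
  by (simp add: mat2_vec2 algebra_simps)

definition arep :: "cmat2 \<Rightarrow> (real \<Rightarrow> real) \<Rightarrow> bool" where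
  "arep M F \<longleftrightarrow> (\<forall>x. \<exists>r>0. M *v vec2 (cis x) (cnj (cis x)) = vec2 (of_real r * cis (F x)) (cnj (of_real r * cis (F x))))"

lemma vec2_scale: "vec2 (of_real r * z) (cnj (of_real r * z)) = of_real r *s vec2 z (cnj z)"
  by (simp add: vec_eq_iff forall_2 vec2_def)

lemma arep_comp: assumes "arep M F" "arep N H" shows "arep (M ** N) (F \<circ> H)"
  unfolding arep_def
proof
  fix x
  obtain r where r: "r > 0" "N *v vec2 (cis x) (cnj (cis x)) = vec2 (of_real r * cis (H x)) (cnj (of_real r * cis (H x)))"
    using assms(2) arep_def by blast
  obtain r' where r': "r' > 0" "M *v vec2 (cis (H x)) (cnj (cis (H x))) = vec2 (of_real r' * cis (F (H x))) (cnj (of_real r' * cis (F (H x))))"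
    using assms(1) arep_def by blast
  have "(M ** N) *v vec2 (cis x) (cnj (cis x)) = M *v (N *v vec2 (cis x) (cnj (cis x)))"
    by (simp add: matrix_vector_mul_assoc)
  also have "\<dots> = of_real r *s (M *v vec2 (cis (H x)) (cnj (cis (H x))))"
    by (simp only: r(2) vec2_scale vector_scalar_commute)
  also have "\<dots> = vec2 (of_real (r*r') * cis (F (H x))) (cnj (of_real (r*r') * cis (F (H x))))"
    unfolding r'(2) by (simp add: vec_eq_iff forall_2 vec2_def)
  finally show "\<exists>r>0. (M ** N) *v vec2 (cis x) (cnj (cis x)) = vec2 (of_real r * cis ((F \<circ> H) x)) (cnj (of_real r * cis ((F \<circ> H) x)))"
    using r r' by (intro exI[of _ "r*r'"]) simp
qed

lemma arep_one: "arep (mat 1) (\<lambda>x. x)"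
  unfolding arep_def by (auto intro: exI[of _ 1])

lemma arep_B: "arep (matB l s) (\<lambda>x. x + l * s)"
  unfolding arep_def matB_def
  by (auto intro!: exI[of _ 1] simp: mat2_vec2 vec2_eq_iff cis_mult cis_cnj algebra_simps)

definition thA :: "real \<Rightarrow> real" where "thA a = pi^2/(2*a)"
definition qA :: "real \<Rightarrow> real" where "qA a = cos (thA a)"
definition dA :: "real \<Rightarrow> real" where "dA a = (if sin (thA a) > 0 then 0 else pi)"
definition hA :: "real \<Rightarrow> real \<Rightarrow> real" where
  "hA a y = y + dA a + arctan (- qA a * cos (2*y) / (1 - qA a * sin (2*y)))"

lemma complex_polar_arctan:
  assumes "X > 0" shows "Complex X Y = of_real (sqrt (X^2+Y^2)) * cis (arctan (Y/X))"
proof -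
  have p: "sqrt (X^2+Y^2) > 0" using assms by (simp add: add_pos_nonneg)
  have s: "sqrt (1 + (Y/X)^2) = sqrt (X^2+Y^2) / X"
  proof -
    have "1 + (Y/X)^2 = (X^2+Y^2)/X^2" using assms by (simp add: field_simps power2_eq_square)
    then have "sqrt (1 + (Y/X)^2) = sqrt (X^2+Y^2) / sqrt (X^2)" by (simp add: real_sqrt_divide)
    then show ?thesis using assms by simp
  qed
  have c: "cos (arctan (Y/X)) = X / sqrt (X^2+Y^2)" unfolding cos_arctan s using assms p by simp
  have d: "sin (arctan (Y/X)) = Y / sqrt (X^2+Y^2)" unfolding sin_arctan s using assms p by simp
  show ?thesis using p by (simp add: complex_eq_iff c d)
qed

lemma abs_qA: assumes "sin (thA a) \<noteq> 0" shows "\<bar>qA a\<bar> < 1"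
proof -
  have "(qA a)^2 = 1 - (sin (thA a))^2" by (simp add: qA_def cos_squared_eq)
  moreover have "(sin (thA a))^2 > 0" using assms by simp
  ultimately have "(qA a)^2 < 1" by linarith
  then show ?thesis by (simp add: abs_square_less_1)
qed

lemma denom_pos: assumes "\<bar>q\<bar> < (1::real)" shows "1 - q * sin y > 0"
proof -
  have "\<bar>q * sin y\<bar> \<le> \<bar>q\<bar>" by (simp add: abs_mult mult_left_le abs_sin_le_one)
  then show ?thesis using assms by linarith
qed

lemma arep_A: assumes "sin (thA a) \<noteq> 0" shows "arep (matA a) (hA a)"
  unfolding arep_def
proof
  fix x
  define t where "t = thA a"
  define q where "q = qA a"
  define X where "X = 1 - q * sin (2*x)"
  define Y where "Y = - q * cos (2*x)"
  have st: "sin t \<noteq> 0" using assms t_def by simp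
  have X: "X > 0" unfolding X_def q_def using denom_pos abs_qA assms by blast
  have c1: "complex_of_real (1/sin t) = of_real \<bar>1/sin t\<bar> * cis (dA a)"
    using st by (auto simp: dA_def t_def[symmetric] complex_eq_iff abs_if)
  have e1: "complex_of_real (1 / sin t) * cis x + - \<i> * complex_of_real (cot t) * cnj (cis x)
       = complex_of_real (1/sin t) * cis x * Complex X Y"
  proof -
    have ct: "complex_of_real (cot t) = complex_of_real (1/sin t) * of_real q" using st by (simp add: cot_def q_def qA_def t_def)
    have CXY: "Complex X Y = 1 - \<i> * of_real q * cis (-(2*x))"
      by (simp add: complex_eq_iff X_def Y_def)
    have cc: "cis x * cis (-(2*x)) = cnj (cis x)" by (simp add: cis_mult cis_cnj)
    have "complex_of_real (1/sin t) * cis x * Complex X Y =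
        complex_of_real (1/sin t) * cis x - \<i> * (complex_of_real (1/sin t) * of_real q) * (cis x * cis (-(2*x)))"
      unfolding CXY by (simp add: algebra_simps)
    also have "\<dots> = complex_of_real (1 / sin t) * cis x + - \<i> * complex_of_real (cot t) * cnj (cis x)"
      unfolding cc ct by simp
    finally show ?thesis by simp
  qed
  have "matA a *v vec2 (cis x) (cnj (cis x)) = vec2 (complex_of_real (1/sin t) * cis x * Complex X Y) (cnj (complex_of_real (1/sin t) * cis x * Complex X Y))"
  proof -
    have m: "matA a = mat2 (complex_of_real (1/sin t)) (- \<i> * complex_of_real (cot t))
         (cnj (- \<i> * complex_of_real (cot t))) (cnj (complex_of_real (1/sin t)))"
      unfolding matA_def Let_def thA_def[symmetric] t_def[symmetric] by simp
    show ?thesis unfolding m su11_vec e1 ..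
  qed
  also have "complex_of_real (1/sin t) * cis x * Complex X Y = of_real (\<bar>1/sin t\<bar> * sqrt (X^2+Y^2)) * cis (hA a x)"
    unfolding c1 complex_polar_arctan[OF X] hA_def X_def[symmetric] Y_def[symmetric] q_def[symmetric]
    by (simp add: cis_mult algebra_simps)
  finally show "\<exists>r>0. matA a *v vec2 (cis x) (cnj (cis x)) = vec2 (complex_of_real r * cis (hA a x)) (cnj (complex_of_real r * cis (hA a x)))"
    using st X by (intro exI[of _ "\<bar>1/sin t\<bar> * sqrt (X^2+Y^2)"]) (auto simp: add_pos_nonneg)
qed

lemma den_pos: assumes "\<bar>q\<bar> < (1::real)" shows "1 - 2*q * sin y + q^2 \<ge> (1 - \<bar>q\<bar>)^2" "(1 - \<bar>q\<bar>)^2 > 0"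
proof -
  have "\<bar>q * sin y\<bar> \<le> \<bar>q\<bar>" by (simp add: abs_mult mult_left_le abs_sin_le_one)
  then have "q * sin y \<le> \<bar>q\<bar>" by linarith
  then show "1 - 2*q * sin y + q^2 \<ge> (1 - \<bar>q\<bar>)^2" by (simp add: power2_eq_square algebra_simps abs_mult_self_eq)
  show "(1 - \<bar>q\<bar>)^2 > 0" using assms by simp
qed

lemma hA_deriv:
  assumes q: "\<bar>q\<bar> < (1::real)"
  shows "((\<lambda>y. y + d + arctan (- q * cos (2*y) / (1 - q * sin (2*y)))) has_real_derivative
          (1-q^2)/(1 - 2*q * sin(2*y) + q^2)) (at y)"
proof -
  define D where "D = 1 - q * sin (2*y)"
  define N where "N = - q * cos (2*y)"
  have D: "D > 0" unfolding D_def using denom_pos[OF q] .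
  have DN0: "D^2 + N^2 = 1 - 2*q * sin(2*y) + q^2 * ((sin (2*y))^2 + (cos (2*y))^2)"
    by (simp only: D_def N_def power2_eq_square) algebra
  have DN: "D^2 + N^2 = 1 - 2*q * sin(2*y) + q^2" unfolding DN0 sin_cos_squared_add by simp
  have pos: "D^2 + N^2 > 0" using D by (simp add: add_pos_nonneg)
  have "((\<lambda>y. y + d + arctan (- q * cos (2*y) / (1 - q * sin (2*y)))) has_real_derivative
     1 + inverse (1 + (N/D)^2) * (((- q * (- sin (2*y) * 2)) * D - N * (- q * (cos (2*y) * 2))) / (D * D))) (at y)"
    unfolding D_def N_def using D unfolding D_def
    by (intro derivative_eq_intros refl) auto
  moreover have "1 + inverse (1 + (N/D)^2) * (((- q * (- sin (2*y) * 2)) * D - N * (- q * (cos (2*y) * 2))) / (D * D))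
      = (1-q^2)/(1 - 2*q * sin(2*y) + q^2)"
  proof -
    have i: "inverse (1 + (N/D)^2) = D^2 / (D^2+N^2)" using D by (simp add: field_simps power2_eq_square)
    have "((- q * (- sin (2*y) * 2)) * D - N * (- q * (cos (2*y) * 2))) = 2*q * sin(2*y) - 2*q^2 * ((sin (2*y))^2 + (cos (2*y))^2)"
      by (simp only: D_def N_def power2_eq_square) algebra
    then have nn: "((- q * (- sin (2*y) * 2)) * D - N * (- q * (cos (2*y) * 2))) = 2*q * sin(2*y) - 2*q^2"
      by (simp only: sin_cos_squared_add mult_1_right)
    define E where "E = D^2 + N^2"
    define w where "w = 2*q * sin(2*y) - 2*q^2"
    have E: "E > 0" using pos E_def by simp
    have "D^2 / E * (w / (D*D)) = w / E" using D by (simp add: power2_eq_square)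
    moreover have "1 + w/E = (E + w)/E" using E by (simp add: field_simps)
    moreover have "E + w = 1 - q^2" unfolding E_def DN w_def by simp
    ultimately have "1 + D^2 / (D^2+N^2) * ((2*q * sin(2*y) - 2*q^2) / (D*D)) = (1-q^2)/(D^2+N^2)"
      unfolding E_def w_def by simp
    then show ?thesis unfolding i nn DN .
  qed
  ultimately show ?thesis by simp
qed

definition nonexc :: "real \<Rightarrow> bool" where "nonexc a \<longleftrightarrow> sin (thA a) \<noteq> 0"

definition KA :: "real \<Rightarrow> real" where "KA a = (1 - (qA a)^2) / (1 - \<bar>qA a\<bar>)^2"

lemma hA_deriv': assumes "nonexc a"
  shows "(hA a has_real_derivative (1-(qA a)^2)/(1 - 2*qA a * sin(2*y) + (qA a)^2)) (at y)"
proof -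
  have q: "\<bar>qA a\<bar> < 1" using abs_qA assms nonexc_def by blast
  have "hA a = (\<lambda>y. y + dA a + arctan (- qA a * cos (2*y) / (1 - qA a * sin (2*y))))"
    by (simp add: hA_def fun_eq_iff)
  then show ?thesis using hA_deriv[OF q] by simp
qed

lemma hA_deriv_bounds: assumes "nonexc a"
  shows "(1-(qA a)^2)/(1 - 2*qA a * sin(2*y) + (qA a)^2) > 0"
        "(1-(qA a)^2)/(1 - 2*qA a * sin(2*y) + (qA a)^2) \<le> KA a"
proof -
  have q: "\<bar>qA a\<bar> < 1" using abs_qA assms nonexc_def by blast
  have n: "1 - (qA a)^2 > 0" using q by (simp add: abs_square_less_1)
  have d1: "1 - 2*qA a * sin(2*y) + (qA a)^2 \<ge> (1 - \<bar>qA a\<bar>)^2" and d2: "(1 - \<bar>qA a\<bar>)^2 > 0"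
    using den_pos[OF q] by auto
  show "(1-(qA a)^2)/(1 - 2*qA a * sin(2*y) + (qA a)^2) > 0"
    by (intro divide_pos_pos n) (use d1 d2 in linarith)
  show "(1-(qA a)^2)/(1 - 2*qA a * sin(2*y) + (qA a)^2) \<le> KA a"
    unfolding KA_def using n d1 d2 by (simp add: frac_le)
qed

lemma KA_pos: assumes "nonexc a" shows "KA a > 0"
  using hA_deriv_bounds[OF assms, of 0] by linarith

lemma hA_mvt: assumes "nonexc a" "y < y'"
  shows "hA a y < hA a y'" "hA a y' - hA a y \<le> KA a * (y' - y)"
proof -
  obtain z where z: "hA a y' - hA a y = (y' - y) * ((1-(qA a)^2)/(1 - 2*qA a * sin(2*z) + (qA a)^2))"
    using MVT2[OF assms(2), of "hA a" "\<lambda>y. (1-(qA a)^2)/(1 - 2*qA a * sin(2*y) + (qA a)^2)"] hA_deriv'[OF assms(1)]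
    by blast
  have p: "(1-(qA a)^2)/(1 - 2*qA a * sin(2*z) + (qA a)^2) > 0"
   and k: "(1-(qA a)^2)/(1 - 2*qA a * sin(2*z) + (qA a)^2) \<le> KA a" using hA_deriv_bounds[OF assms(1)] by auto
  have "(y' - y) * ((1-(qA a)^2)/(1 - 2*qA a * sin(2*z) + (qA a)^2)) > 0"
    using p assms(2) by (intro mult_pos_pos) auto
  then show "hA a y < hA a y'" using z by linarith
  have "(y' - y) * ((1-(qA a)^2)/(1 - 2*qA a * sin(2*z) + (qA a)^2)) \<le> (y' - y) * KA a"
    using k assms(2) by (intro mult_left_mono) auto
  then show "hA a y' - hA a y \<le> KA a * (y' - y)" using z by (simp only: mult.commute)
qed

lemma hA_mono: assumes "nonexc a" "y \<le> y'" shows "hA a y \<le> hA a y'"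
  using hA_mvt[OF assms(1)] assms(2) by (cases "y = y'") (auto simp: less_le)

lemma hA_lip: assumes "nonexc a" shows "\<bar>hA a y - hA a y'\<bar> \<le> KA a * \<bar>y - y'\<bar>"
proof (cases y y' rule: linorder_cases)
  case less then show ?thesis using hA_mvt[OF assms less] by simp
next
  case equal then show ?thesis by simp
next
  case greater then show ?thesis using hA_mvt[OF assms greater] by simp
qed

lemma hA_cont: assumes "nonexc a" shows "continuous_on UNIV (hA a)"
  using hA_deriv'[OF assms] by (meson DERIV_isCont continuous_at_imp_continuous_on)

lemma hA_periodic: "hA a (y + pi) = hA a y + pi"
proof -
  have "cos (2*(y+pi)) = cos (2*y)" "sin (2*(y+pi)) = sin (2*y)"
    by (simp_all add: distrib_left cos_add sin_add)
  then show ?thesis unfolding hA_def by simp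
qed

lemma hA_lower: "hA a y > y - pi/2"
proof -
  have "dA a \<ge> 0" unfolding dA_def by simp
  then show ?thesis unfolding hA_def using arctan_lbound[of "- qA a * cos (2*y) / (1 - qA a * sin (2*y))"] by linarith
qed

lemma arep_A': "nonexc a \<Longrightarrow> arep (matA a) (hA a)"
  using arep_A nonexc_def by blast

lemma su11_A': "nonexc a \<Longrightarrow> su11 (matA a)"
  using su11_A nonexc_def thA_def by simp

lemma nonexc_iff: assumes "0 < a" shows "nonexc a \<longleftrightarrow> \<not> exceptional a"
proof -
  have "sin (thA a) = 0 \<longleftrightarrow> (\<exists>k::nat. k \<ge> 1 \<and> a = pi / (2 * real k))"
  proof
    assume "sin (thA a) = 0"
    then obtain i::int where i: "thA a = of_int i * pi" using sin_zero_iff_int2 by blast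
    have th: "thA a = pi * (pi / (2*a))" unfolding thA_def by (simp add: power2_eq_square)
    have pos: "pi / (2*a) > 0" using assms by simp
    have "pi * (pi / (2*a)) = pi * of_int i" using i th by simp
    then have "of_int i = pi / (2*a)" using pi_gt_zero by (metis mult_cancel_left pi_neq_zero)
    then have ip: "i > 0" using pos by linarith
    have "a = pi / (2 * real (nat i))" using \<open>of_int i = pi / (2*a)\<close> ip assms
      by (simp add: field_simps)
    then show "\<exists>k::nat. k \<ge> 1 \<and> a = pi / (2 * real k)" using ip by (intro exI[of _ "nat i"]) simp
  next
    assume "\<exists>k::nat. k \<ge> 1 \<and> a = pi / (2 * real k)"
    then obtain k::nat where k: "k \<ge> 1" "a = pi / (2 * real k)" by blast
    have "thA a = real k * pi" unfolding thA_def k(2) using k(1) by (simp add: power2_eq_square field_simps)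
    then show "sin (thA a) = 0" by (simp add: sin_zero_iff_int2)
  qed
  then show ?thesis unfolding nonexc_def exceptional_def by blast
qed

lemma vec2_components: "(v::cvec2) = vec2 (v$1) (v$2)"
  by (simp add: vec_eq_iff forall_2 vec2_def)

lemma cmod_rel: assumes "(cmod a)^2 - (cmod b)^2 = 1" shows "a * cnj a - b * cnj b = 1"
proof -
  have "a * cnj a - b * cnj b = of_real ((cmod a)^2 - (cmod b)^2)"
    by (simp add: complex_mult_cnj cmod_power2)
  then show ?thesis using assms by simp
qed

lemma fixed_iff: "mat2 a b (cnj b) (cnj a) *v v = v \<longleftrightarrow>
   a * v$1 + b * v$2 = v$1 \<and> cnj b * v$1 + cnj a * v$2 = v$2"
  by (subst (1 2) vec2_components) (simp add: mat2_vec2 vec2_eq_iff)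

lemma dim_fixed:
  assumes H: "(cmod a)^2 - (cmod b)^2 = 1"
  shows "geom_mult1 (mat2 a b (cnj b) (cnj a)) = (if a = 1 \<and> b = 0 then 2 else if Re a = 1 then 1 else 0)"
proof -
  have h: "a * cnj a - b * cnj b = 1" using cmod_rel[OF H] .
  let ?S = "{v :: cvec2. mat2 a b (cnj b) (cnj a) *v v = v}"
  show ?thesis
  proof (cases "a = 1 \<and> b = 0")
    case True
    then have "?S = UNIV" unfolding fixed_iff by auto
    then have "geom_mult1 (mat2 a b (cnj b) (cnj a)) = vec.dim (UNIV :: cvec2 set)" unfolding geom_mult1_def by simp
    also have "\<dots> = 2" using vec_dim_card[where 'a=complex and 'n=2] by simp
    finally show ?thesis using True by simp
  next
    case F: False
    show ?thesis
    proof (cases "Re a = 1")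
      case True
      have b0: "b \<noteq> 0"
      proof
        assume "b = 0"
        then have "(Re a)^2 + (Im a)^2 = 1" using H by (simp add: cmod_power2)
        then have "a = 1" using True by (simp add: complex_eq_iff)
        then show False using F \<open>b = 0\<close> by simp
      qed
      have ra: "a + cnj a = 2" using True by (simp add: complex_eq_iff)
      define w where "w = vec2 1 ((1 - a) / b)"
      have "?S = range (\<lambda>c. c *s w)"
      proof (intro set_eqI iffI)
        fix v assume "v \<in> ?S"
        then have r1: "a * v$1 + b * v$2 = v$1" by (simp add: fixed_iff)
        have "v$2 = v$1 * ((1 - a) / b)" using r1 b0 by (simp add: field_simps)
        then have "v = v$1 *s w" unfolding w_def by (subst vec2_components) (simp add: vec2_eq_iff vec_eq_iff forall_2 vec2_def)
        then show "v \<in> range (\<lambda>c. c *s w)" by blast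
      next
        fix v assume "v \<in> range (\<lambda>c. c *s w)"
        then obtain c where c: "v = c *s w" by blast
        have v1: "v$1 = c" and v2: "v$2 = c * ((1 - a) / b)" unfolding c w_def by (simp_all add: vec2_def)
        have e1: "a * v$1 + b * v$2 = v$1" unfolding v1 v2 using b0 by (simp add: field_simps)
        have "cnj b * b + cnj a * (1 - a) = 1 - a"
        proof -
          have "cnj b * b = a * cnj a - 1" using h by (simp add: algebra_simps)
          then have "cnj b * b + cnj a * (1 - a) = (a * cnj a - 1) + cnj a - cnj a * a" by (simp add: algebra_simps)
          also have "\<dots> = cnj a - 1" by (simp add: algebra_simps)
          also have "\<dots> = 1 - a" using ra by (simp add: algebra_simps)
          finally show ?thesis .
        qed
        moreover have "cnj b * c + cnj a * (c * ((1 - a) / b)) = c * (cnj b * b + cnj a * (1 - a)) / b"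
          using b0 by (simp add: field_simps)
        ultimately have e2: "cnj b * v$1 + cnj a * v$2 = v$2" unfolding v1 v2 by simp
        show "v \<in> ?S" using e1 e2 by (simp add: fixed_iff)
      qed
      then have "geom_mult1 (mat2 a b (cnj b) (cnj a)) = vec.dim {w}"
        unfolding geom_mult1_def by (simp add: vec.span_singleton[symmetric])
      also have "\<dots> = 1" unfolding w_def by (simp add: vec2_eq_iff vec_eq_iff forall_2 vec2_def)
      finally show ?thesis using F True by simp
    next
      case False
      have "?S \<subseteq> {0}"
      proof
        fix v assume "v \<in> ?S"
        then have r1: "a * v$1 + b * v$2 = v$1" and r2: "cnj b * v$1 + cnj a * v$2 = v$2" by (auto simp: fixed_iff)
        have "(a - 1) * (cnj a - 1) - b * cnj b = 2 - (a + cnj a)" using h by (simp add: algebra_simps)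
        moreover have "a + cnj a \<noteq> 2" using False by (simp add: complex_eq_iff)
        ultimately have det: "(a - 1) * (cnj a - 1) - b * cnj b \<noteq> 0" by simp
        have "((a - 1) * (cnj a - 1) - b * cnj b) * v$1 = 0"
        proof -
          have e1: "(a-1) * v$1 = - b * v$2" using r1 by (simp add: algebra_simps)
          have e2: "(cnj a - 1) * v$2 = - cnj b * v$1" using r2 by (simp add: algebra_simps)
          have "(cnj a - 1) * ((a-1) * v$1) = (cnj a - 1) * (- b * v$2)" using e1 by simp
          also have "\<dots> = - b * ((cnj a - 1) * v$2)" by (simp add: algebra_simps)
          also have "\<dots> = b * cnj b * v$1" using e2 by simp
          finally have X: "(cnj a - 1) * ((a-1) * v$1) = b * cnj b * v$1" .
          have "((a - 1) * (cnj a - 1) - b * cnj b) * v$1 = (cnj a - 1) * ((a-1) * v$1) - b * cnj b * v$1"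
            by (simp add: algebra_simps)
          then show ?thesis using X by simp
        qed
        then have v1: "v$1 = 0" using det by simp
        have "((a - 1) * (cnj a - 1) - b * cnj b) * v$2 = 0"
        proof -
          have e1: "(a-1) * v$1 = - b * v$2" using r1 by (simp add: algebra_simps)
          have e2: "(cnj a - 1) * v$2 = - cnj b * v$1" using r2 by (simp add: algebra_simps)
          have "(a - 1) * ((cnj a-1) * v$2) = (a - 1) * (- cnj b * v$1)" using e2 by simp
          also have "\<dots> = - cnj b * ((a - 1) * v$1)" by (simp add: algebra_simps)
          also have "\<dots> = b * cnj b * v$2" using e1 by simp
          finally have X: "(a - 1) * ((cnj a-1) * v$2) = b * cnj b * v$2" .
          have "((a - 1) * (cnj a - 1) - b * cnj b) * v$2 = (a - 1) * ((cnj a-1) * v$2) - b * cnj b * v$2"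
            by (simp add: algebra_simps)
          then show ?thesis using X by simp
        qed
        then have v2: "v$2 = 0" using det by simp
        show "v \<in> {0}" using v1 v2 by (simp add: vec_eq_iff forall_2)
      qed
      then have g0: "geom_mult1 (mat2 a b (cnj b) (cnj a)) = 0" unfolding geom_mult1_def by simp
      have "(if a = 1 \<and> b = 0 then 2 else if Re a = 1 then 1 else 0) = (0::nat)" using F False by simp
      then show ?thesis using g0 by simp
    qed
  qed
qed

lemma ivt_between:
  fixes G :: "real \<Rightarrow> real"
  assumes "continuous_on {0..pi} G" "u \<in> {0..pi}" "v \<in> {0..pi}" "G u \<le> c" "c \<le> G v"
  shows "\<exists>z\<in>{0..pi}. G z = c"
proof (cases "u \<le> v")
  case True
  have "continuous_on {u..v} G" by (rule continuous_on_subset[OF assms(1)]) (use assms in auto)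
  then obtain z where "u \<le> z" "z \<le> v" "G z = c" using IVT'[of G u c v] assms True by blast
  then show ?thesis using assms(2,3) by auto
next
  case False
  have "continuous_on {v..u} G" by (rule continuous_on_subset[OF assms(1)]) (use assms in auto)
  then obtain z where "v \<le> z" "z \<le> u" "G z = c" using IVT2'[of G u c v] assms False by auto
  then show ?thesis using assms(2,3) by auto
qed

lemma unit_angle: assumes "cmod w = 1" shows "\<exists>x\<in>{0..pi}. cis (-(2*x)) = w"
proof -
  have w0: "w \<noteq> 0" using assms by auto
  define t where "t = Arg w"
  have t: "- pi < t" "t \<le> pi" using Arg_bounded t_def by auto
  have cw: "cis t = w" using cis_Arg[OF w0] assms t_def by (simp add: sgn_div_norm)
  show ?thesis
  proof (cases "t \<le> 0")
    case True
    then show ?thesis using t cw by (intro bexI[of _ "-t/2"]) auto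
  next
    case False
    have "cis (-(2*(pi - t/2))) = cis t" by (simp add: cis_def complex_eq_iff cos_diff sin_diff)
    then show ?thesis using t cw False by (intro bexI[of _ "pi - t/2"]) auto
  qed
qed

lemma eig_rel:
  assumes H: "(cmod a)^2 - (cmod b)^2 = 1"
    and e: "a * cis x + b * cnj (cis x) = of_real t * cis x"
  shows "2 * t * Re a = 1 + t^2"
proof -
  have c1: "cnj (cis x) * cis x = 1" by (simp add: cis_cnj cis_mult)
  have "cnj (cis x) * (a * cis x + b * cnj (cis x)) = cnj (cis x) * (of_real t * cis x)" using e by simp
  then have "a + b * cnj (cis x)^2 = of_real t" using c1 by (simp add: algebra_simps power2_eq_square)
  then have "b * cnj (cis x)^2 = of_real t - a" by (simp add: algebra_simps)
  then have "cmod b = cmod (of_real t - a)" by (metis norm_mult norm_power complex_mod_cnj norm_cis power_one mult_1_right)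
  then have "(cmod b)^2 = (t - Re a)^2 + (Im a)^2" by (simp add: cmod_power2)
  moreover have "(cmod a)^2 = (Re a)^2 + (Im a)^2" by (simp add: cmod_power2)
  ultimately show ?thesis using H by (simp add: power2_eq_square algebra_simps)
qed

lemma Qf_rel:
  assumes e: "a * cis x + b * cnj (cis x) = of_real r * cis (x + g)"
  shows "r * sin g = Im a + Im (b * cis (-(2*x)))"
proof -
  have c1: "cnj (cis x) * cis x = 1" by (simp add: cis_cnj cis_mult)
  have c2: "cnj (cis x) * cnj (cis x) = cis (-(2*x))" by (simp add: cis_cnj cis_mult)
  have c3: "cnj (cis x) * cis (x + g) = cis g" by (simp add: cis_cnj cis_mult)
  have "cnj (cis x) * (a * cis x + b * cnj (cis x)) = cnj (cis x) * (of_real r * cis (x + g))" using e by simp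
  then have "a * (cnj (cis x) * cis x) + b * (cnj (cis x) * cnj (cis x)) = of_real r * (cnj (cis x) * cis (x + g))"
    by (simp add: algebra_simps)
  then have "a + b * cis (-(2*x)) = of_real r * cis g" unfolding c1 c2 c3 by simp
  then have "Im (a + b * cis (-(2*x))) = Im (of_real r * cis g)" by simp
  then show ?thesis by simp
qed

lemma Im_bound: "\<bar>Im (b * cis y)\<bar> \<le> cmod b"
  by (metis abs_Im_le_cmod norm_cis norm_mult mult_1_right)

lemma Im_witness:
  shows "\<exists>x\<in>{0..pi}. Im (b * cis (-(2*x))) = cmod b" "\<exists>x\<in>{0..pi}. Im (b * cis (-(2*x))) = - cmod b"
proof -
  have "\<exists>x\<in>{0..pi}. Im (b * cis (-(2*x))) = s * cmod b" if s: "s = 1 \<or> s = -1" for s :: real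
  proof (cases "b = 0")
    case True then show ?thesis by auto
  next
    case False
    define w where "w = \<i> * of_real s * of_real (cmod b) / b"
    have "cmod w = 1" using False s unfolding w_def by (auto simp: norm_mult norm_divide)
    then obtain x where x: "x \<in> {0..pi}" "cis (-(2*x)) = w" using unit_angle by blast
    have "b * w = \<i> * of_real (s * cmod b)" unfolding w_def using False by (simp add: field_simps)
    then show ?thesis using x by (intro bexI[of _ x]) auto
  qed
  from this[of 1] this[of "-1"] show "\<exists>x\<in>{0..pi}. Im (b * cis (-(2*x))) = cmod b" "\<exists>x\<in>{0..pi}. Im (b * cis (-(2*x))) = - cmod b"
    by auto
qed

lemma fixed_exists:
  assumes H: "(cmod a)^2 - (cmod b)^2 = 1" and R: "Re a = 1"
  shows "\<exists>x\<in>{0..pi}. a * cis x + b * cnj (cis x) = cis x"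
proof (cases "b = 0")
  case True
  then have "(Re a)^2 + (Im a)^2 = 1" using H by (simp add: cmod_power2)
  then have "a = 1" using R by (simp add: complex_eq_iff)
  then show ?thesis using True by (intro bexI[of _ 0]) auto
next
  case False
  have "(cmod (a - 1))^2 = (Re a - 1)^2 + (Im a)^2" by (simp add: cmod_power2)
  also have "\<dots> = (cmod a)^2 - 1" using R by (simp add: cmod_power2)
  also have "\<dots> = (cmod b)^2" using H by simp
  finally have "cmod (a - 1) = cmod b" by (simp add: power2_eq_iff_nonneg)
  then have a1: "a - 1 \<noteq> 0" using False by auto
  define w where "w = cnj (- b / (a - 1))"
  have "cmod w = 1" unfolding w_def complex_mod_cnj using \<open>cmod (a - 1) = cmod b\<close> a1 False by (simp add: norm_divide)
  then obtain x where x: "x \<in> {0..pi}" "cis (-(2*x)) = w" using unit_angle by blast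
  then have "cis (2*x) = - b / (a - 1)" unfolding w_def by (metis cis_cnj complex_cnj_cnj)
  then have "(a - 1) * cis (2*x) = - b" using a1 by simp
  then have "(a - 1) * cis (2*x) * cnj (cis x) = - b * cnj (cis x)" by simp
  moreover have "cis (2*x) * cnj (cis x) = cis x" by (simp add: cis_cnj cis_mult)
  ultimately have "(a - 1) * cis x = - b * cnj (cis x)" by (simp add: algebra_simps)
  then show ?thesis using x by (intro bexI[of _ x]) (simp_all add: algebra_simps)
qed

lemma cis_2pik: "cis (y + 2*pi * of_int k) = cis y"
proof -
  have "cos (2*pi * of_int k) = 1" using cos_one_2pi_int[of "2*pi * of_int k"] by (auto intro: exI[of _ k])
  moreover have "sin (2*pi * of_int k) = 0" using sin_zero_iff_int2[of "2*pi * of_int k"] by (auto intro!: exI[of _ "2*k"])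
  ultimately show ?thesis by (simp add: cis_def complex_eq_iff cos_add sin_add)
qed

lemma sin_2pik: "sin (y - 2*pi * of_int k) = sin y"
proof -
  have "cis (y - 2*pi * of_int k + 2*pi * of_int k) = cis (y - 2*pi * of_int k)" by (rule cis_2pik)
  then show ?thesis by (simp add: complex_eq_iff)
qed

lemma sign_lemma:
  fixes y :: real and k :: int
  defines "c \<equiv> 2*pi * of_int k"
  shows "c \<le> y \<Longrightarrow> y < c + pi \<Longrightarrow> sin y \<ge> 0"
    and "c < y \<Longrightarrow> y < c + pi \<Longrightarrow> sin y > 0"
    and "c - pi < y \<Longrightarrow> y \<le> c \<Longrightarrow> sin y \<le> 0"
    and "c - pi < y \<Longrightarrow> y < c \<Longrightarrow> sin y < 0"
proof -
  have s: "sin y = sin (y - c)" unfolding c_def by (simp add: sin_2pik)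
  show "c \<le> y \<Longrightarrow> y < c + pi \<Longrightarrow> sin y \<ge> 0" unfolding s by (intro sin_ge_zero) auto
  show "c < y \<Longrightarrow> y < c + pi \<Longrightarrow> sin y > 0" unfolding s by (intro sin_gt_zero) auto
  have s2: "sin (y - c) = - sin (c - y)" by (simp add: sin_diff)
  show "c - pi < y \<Longrightarrow> y \<le> c \<Longrightarrow> sin y \<le> 0" unfolding s s2 using sin_ge_zero[of "c - y"] by auto
  show "c - pi < y \<Longrightarrow> y < c \<Longrightarrow> sin y < 0" unfolding s s2 using sin_gt_zero[of "c - y"] by auto
qed

lemma no_int_between:
  fixes k j :: int
  assumes "2*pi * of_int k < 2*pi * of_int j" "2*pi * of_int j < 2*pi * of_int k + pi"
  shows False
proof -
  have "of_int k < (of_int j :: real)" using assms(1) by simp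
  then have "k + 1 \<le> j" by simp
  then have "of_int k + 1 \<le> (of_int j :: real)" by linarith
  then have "2*pi*(of_int k + 1) \<le> 2*pi * of_int j" by (intro mult_left_mono) auto
  then have "2*pi * of_int k + 2*pi \<le> 2*pi * of_int j" by (simp add: algebra_simps)
  then show False using assms(2) pi_gt_zero by linarith
qed

lemma no_int_between2:
  fixes k j :: int
  assumes "2*pi * of_int j < 2*pi * of_int k" "2*pi * of_int k - pi < 2*pi * of_int j"
  shows False
proof -
  have "of_int j < (of_int k :: real)" using assms(1) by simp
  then have "j + 1 \<le> k" by simp
  then have "of_int j + 1 \<le> (of_int k :: real)" by linarith
  then have "2*pi*(of_int j + 1) \<le> 2*pi * of_int k" by (intro mult_left_mono) auto
  then have "2*pi * of_int j + 2*pi \<le> 2*pi * of_int k" by (simp add: algebra_simps)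
  then show False using assms(2) pi_gt_zero by linarith
qed

lemma fixed_2pik:
  assumes "a * cis x + b * cnj (cis x) = cis x" "a * cis x + b * cnj (cis x) = of_real r * cis (x + g)" "r > 0"
  shows "\<exists>k::int. g = 2*pi * of_int k"
proof -
  have "of_real r * cis (x + g) = cis x" using assms by simp
  then have "cnj (cis x) * (of_real r * cis (x + g)) = cnj (cis x) * cis x" by simp
  then have e: "of_real r * cis g = 1" by (simp add: cis_cnj cis_mult algebra_simps)
  then have "cmod (of_real r * cis g) = 1" by simp
  then have "r = 1" using assms(3) by (simp add: norm_mult)
  then have "cis g = 1" using e by simp
  then have "cos g = 1" by (simp add: complex_eq_iff)
  then obtain n::int where "g = of_int n * 2 * pi" using cos_one_2pi_int by blast
  then show ?thesis by (intro exI[of _ n]) simp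
qed

lemma core:
  fixes a b :: complex and G :: "real \<Rightarrow> real"
  assumes H: "(cmod a)^2 - (cmod b)^2 = 1"
    and rep: "\<And>x. x \<in> {0..pi} \<Longrightarrow> \<exists>r>0. a * cis x + b * cnj (cis x) = of_real r * cis (x + G x)"
    and cont: "continuous_on {0..pi} G"
    and xm: "xm \<in> {0..pi}" "\<And>x. x \<in> {0..pi} \<Longrightarrow> G xm \<le> G x"
    and xM: "xM \<in> {0..pi}" "\<And>x. x \<in> {0..pi} \<Longrightarrow> G x \<le> G xM"
  shows "geom_mult1 (mat2 a b (cnj b) (cnj a)) =
     (if \<exists>k::int. G xm = 2*pi * of_int k then 1 else 0) + (if \<exists>k::int. G xM = 2*pi * of_int k then 1 else 0)"
proof -
  have neg: "G x \<noteq> 2*pi * of_int k + pi" if ra: "Re a > -1" and xr: "x \<in> {0..pi}" for x k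
  proof
    assume g: "G x = 2*pi * of_int k + pi"
    obtain r where r: "r > 0" "a * cis x + b * cnj (cis x) = of_real r * cis (x + G x)" using rep xr by blast
    have "cis (x + G x) = cis (x + pi + 2*pi * of_int k)" unfolding g by (simp add: algebra_simps)
    also have "\<dots> = - cis x" unfolding cis_2pik by (simp add: cis_def complex_eq_iff)
    finally have "a * cis x + b * cnj (cis x) = of_real (-r) * cis x" using r by simp
    then have "2 * (-r) * Re a = 1 + (-r)^2" by (rule eig_rel[OF H])
    moreover have "1 + r^2 \<ge> 2 * r"
    proof -
      have "0 \<le> (r - 1)^2" by simp
      also have "\<dots> = r^2 + 1 - 2*r" by (simp add: power2_diff)
      finally show ?thesis by simp
    qed
    ultimately have "r * Re a \<le> r * (- 1)" by (simp add: power2_eq_square)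
    then have "Re a \<le> -1" using mult_le_cancel_left_pos[OF r(1), of "Re a" "-1"] by simp
    then show False using ra by simp
  qed
  have range: "\<forall>x\<in>{0..pi}. 2*pi * of_int k - pi < G x \<and> G x < 2*pi * of_int k + pi"
    if ra: "Re a > -1" and x0r: "x0 \<in> {0..pi}" and gx0: "G x0 = 2*pi * of_int k" for x0 k
  proof
    fix x assume x: "x \<in> {0..pi}"
    show "2*pi * of_int k - pi < G x \<and> G x < 2*pi * of_int k + pi"
    proof (rule ccontr)
      assume "\<not> ?thesis"
      then consider "G x \<ge> 2*pi * of_int k + pi" | "G x \<le> 2*pi * of_int k - pi" by linarith
      then show False
      proof cases
        case 1
        obtain z where z: "z \<in> {0..pi}" "G z = 2*pi * of_int k + pi"
          using ivt_between[OF cont x0r x, of "2*pi * of_int k + pi"] gx0 1 pi_gt_zero by auto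
        then show False using neg[OF ra z(1)] by simp
      next
        case 2
        obtain z where z: "z \<in> {0..pi}" "G z = 2*pi * of_int k - pi"
          using ivt_between[OF cont x x0r, of "2*pi * of_int k - pi"] gx0 2 pi_gt_zero by auto
        have "G z = 2*pi * of_int (k - 1) + pi" using z(2) by (simp add: algebra_simps)
        moreover have "G z \<noteq> 2*pi * of_int (k - 1) + pi" by (rule neg[OF ra z(1)])
        ultimately show False by simp
      qed
    qed
  qed
  have Qs: "\<exists>r>0. r * sin (G x) = Im a + Im (b * cis (-(2*x)))" if xr: "x \<in> {0..pi}" for x
  proof -
    obtain r where r: "r > 0" "a * cis x + b * cnj (cis x) = of_real r * cis (x + G x)"
      using rep[OF xr] by blast
    show ?thesis using r(1) Qf_rel[OF r(2)] by blast
  qed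
  have rel: "(Im a)^2 - (cmod b)^2 = 1 - (Re a)^2" using H by (simp add: cmod_power2)
  have pos: "Re a \<ge> 1" if xr: "x \<in> {0..pi}" and gk: "G x = 2*pi * of_int k" for x k
  proof -
    obtain r where r: "r > 0" "a * cis x + b * cnj (cis x) = of_real r * cis (x + G x)" using rep xr by blast
    have "cis (x + G x) = cis x" unfolding gk using cis_2pik by simp
    then have "a * cis x + b * cnj (cis x) = of_real r * cis x" using r by simp
    then have "2 * r * Re a = 1 + r^2" by (rule eig_rel[OF H])
    moreover have "1 + r^2 \<ge> 2 * r"
    proof -
      have "0 \<le> (r - 1)^2" by simp
      also have "\<dots> = r^2 + 1 - 2*r" by (simp add: power2_diff)
      finally show ?thesis by simp
    qed
    ultimately have "r * Re a \<ge> r * 1" by simp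
    then show ?thesis using mult_le_cancel_left_pos[OF r(1), of 1 "Re a"] by simp
  qed
  obtain x1 where x1: "x1 \<in> {0..pi}" "Im (b * cis (-(2*x1))) = cmod b" using Im_witness by blast
  obtain x2 where x2: "x2 \<in> {0..pi}" "Im (b * cis (-(2*x2))) = - cmod b" using Im_witness by blast
  show ?thesis
  proof (cases "Re a = 1")
    case R: True
    obtain x0 where x0: "x0 \<in> {0..pi}" "a * cis x0 + b * cnj (cis x0) = cis x0" using fixed_exists[OF H R] by blast
    obtain r0 where r0: "r0 > 0" "a * cis x0 + b * cnj (cis x0) = of_real r0 * cis (x0 + G x0)"
      using rep[OF x0(1)] by blast
    obtain k where k: "G x0 = 2*pi * of_int k"
      using fixed_2pik[OF x0(2) r0(2) r0(1)] by blast
    have rg: "\<forall>x\<in>{0..pi}. 2*pi * of_int k - pi < G x \<and> G x < 2*pi * of_int k + pi" using range[OF _ x0(1) k] R by simp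
    have ib: "(Im a)^2 = (cmod b)^2" using rel R by simp
    show ?thesis
    proof (cases "a = 1 \<and> b = 0")
      case True
      have all: "\<exists>k::int. G x = 2*pi * of_int k" if xr: "x \<in> {0..pi}" for x
      proof -
        obtain r where r: "r > 0" "a * cis x + b * cnj (cis x) = of_real r * cis (x + G x)"
          using rep[OF xr] by blast
        have "a * cis x + b * cnj (cis x) = cis x" using True by simp
        then show ?thesis using fixed_2pik[OF _ r(2) r(1)] by blast
      qed
      show ?thesis using dim_fixed[OF H] True all xm(1) xM(1) by simp
    next
      case F: False
      have b0: "b \<noteq> 0"
      proof
        assume "b = 0"
        then have "(Re a)^2 + (Im a)^2 = 1" using H by (simp add: cmod_power2)
        then have "a = 1" using R by (simp add: complex_eq_iff)
        then show False using F \<open>b = 0\<close> by simp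
      qed
      have g1: "geom_mult1 (mat2 a b (cnj b) (cnj a)) = 1" using dim_fixed[OF H] F R by simp
      have "Im a = cmod b \<or> Im a = - cmod b" using ib by (simp add: power2_eq_iff)
      then show ?thesis
      proof
        assume I: "Im a = cmod b"
        have ge: "G x \<ge> 2*pi * of_int k" if x: "x \<in> {0..pi}" for x
        proof -
          obtain r where r: "r > 0" "r * sin (G x) = Im a + Im (b * cis (-(2*x)))" using Qs[OF x] by blast
          have "Im a + Im (b * cis (-(2*x))) \<ge> 0" using Im_bound[of b "-(2*x)"] I by linarith
          then have "0 \<le> r * sin (G x)" using r(2) by linarith
          then have "sin (G x) \<ge> 0" using r(1) by (simp add: zero_le_mult_iff)
          then show ?thesis using rg x sign_lemma(4)[of k "G x"] by force
        qed
        have m: "G xm = 2*pi * of_int k" using ge[OF xm(1)] xm(2)[OF x0(1)] k by simp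
        have gx1: "G x1 > 2*pi * of_int k"
        proof -
          obtain r where r: "r > 0" "r * sin (G x1) = Im a + Im (b * cis (-(2*x1)))" using Qs[OF x1(1)] by blast
          have "Im a + Im (b * cis (-(2*x1))) > 0" using x1(2) I b0 by simp
          then have "0 < r * sin (G x1)" using r(2) by linarith
          then have "sin (G x1) > 0" using r(1) by (simp add: zero_less_mult_iff)
          then show ?thesis using rg x1(1) sign_lemma(3)[of k "G x1"] by force
        qed
        have "\<not> (\<exists>j::int. G xM = 2*pi * of_int j)"
        proof
          assume "\<exists>j::int. G xM = 2*pi * of_int j"
          then obtain j::int where j: "G xM = 2*pi * of_int j" by blast
          have "2*pi * of_int k < 2*pi * of_int j" using gx1 xM(2)[OF x1(1)] j by linarith
          moreover have "2*pi * of_int j < 2*pi * of_int k + pi" using rg[rule_format, OF xM(1)] j by linarith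
          ultimately show False by (rule no_int_between)
        qed
        then show ?thesis using g1 m by auto
      next
        assume I: "Im a = - cmod b"
        have le: "G x \<le> 2*pi * of_int k" if x: "x \<in> {0..pi}" for x
        proof -
          obtain r where r: "r > 0" "r * sin (G x) = Im a + Im (b * cis (-(2*x)))" using Qs[OF x] by blast
          have "Im a + Im (b * cis (-(2*x))) \<le> 0" using Im_bound[of b "-(2*x)"] I by linarith
          then have "r * sin (G x) \<le> 0" using r(2) by linarith
          then have "sin (G x) \<le> 0" using r(1) by (simp add: mult_le_0_iff)
          then show ?thesis using rg x sign_lemma(2)[of k "G x"] by force
        qed
        have M: "G xM = 2*pi * of_int k" using le[OF xM(1)] xM(2)[OF x0(1)] k by simp
        have gx2: "G x2 < 2*pi * of_int k"
        proof -
          obtain r where r: "r > 0" "r * sin (G x2) = Im a + Im (b * cis (-(2*x2)))" using Qs[OF x2(1)] by blast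
          have "Im a + Im (b * cis (-(2*x2))) < 0" using x2(2) I b0 by simp
          then have "r * sin (G x2) < 0" using r(2) by linarith
          then have "sin (G x2) < 0" using r(1) by (simp add: mult_less_0_iff)
          then show ?thesis using rg x2(1) sign_lemma(1)[of k "G x2"] by force
        qed
        have "\<not> (\<exists>j::int. G xm = 2*pi * of_int j)"
        proof
          assume "\<exists>j::int. G xm = 2*pi * of_int j"
          then obtain j::int where j: "G xm = 2*pi * of_int j" by blast
          have "2*pi * of_int j < 2*pi * of_int k" using gx2 xm(2)[OF x2(1)] j by linarith
          moreover have "2*pi * of_int k - pi < 2*pi * of_int j" using rg[rule_format, OF xm(1)] j by linarith
          ultimately show False by (rule no_int_between2)
        qed
        then show ?thesis using g1 M by auto
      qed
    qed
  next
    case R: False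
    have g0: "geom_mult1 (mat2 a b (cnj b) (cnj a)) = 0" using dim_fixed[OF H] R by auto
    have n1: "\<not> (\<exists>k::int. G xm = 2*pi * of_int k)"
    proof
      assume "\<exists>k::int. G xm = 2*pi * of_int k"
      then obtain k::int where k: "G xm = 2*pi * of_int k" by blast
      have Ra: "Re a > 1" using pos[OF xm(1) k] R by simp
      have rg: "\<forall>x\<in>{0..pi}. 2*pi * of_int k - pi < G x \<and> G x < 2*pi * of_int k + pi" using range[OF _ xm(1) k] Ra by simp
      have "(Re a)^2 > 1" using Ra by (simp add: one_less_power)
      then have "(Im a)^2 < (cmod b)^2" using rel by linarith
      then have "Im a < cmod b" by (rule power2_less_imp_less) simp
      obtain r where r: "r > 0" "r * sin (G x2) = Im a + Im (b * cis (-(2*x2)))" using Qs[OF x2(1)] by blast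
      have "Im a + Im (b * cis (-(2*x2))) < 0" using x2(2) \<open>Im a < cmod b\<close> by simp
      then have "r * sin (G x2) < 0" using r(2) by linarith
          then have "sin (G x2) < 0" using r(1) by (simp add: mult_less_0_iff)
      moreover have "G x2 \<ge> 2*pi * of_int k" using xm(2)[OF x2(1)] k by simp
      ultimately show False using rg x2(1) sign_lemma(1)[of k "G x2"] by force
    qed
    have n2: "\<not> (\<exists>k::int. G xM = 2*pi * of_int k)"
    proof
      assume "\<exists>k::int. G xM = 2*pi * of_int k"
      then obtain k::int where k: "G xM = 2*pi * of_int k" by blast
      have Ra: "Re a > 1" using pos[OF xM(1) k] R by simp
      have rg: "\<forall>x\<in>{0..pi}. 2*pi * of_int k - pi < G x \<and> G x < 2*pi * of_int k + pi" using range[OF _ xM(1) k] Ra by simp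
      have "(Re a)^2 > 1" using Ra by (simp add: one_less_power)
      then have "(- Im a)^2 < (cmod b)^2" using rel by simp
      then have "- Im a < cmod b" by (rule power2_less_imp_less) simp
      obtain r where r: "r > 0" "r * sin (G x1) = Im a + Im (b * cis (-(2*x1)))" using Qs[OF x1(1)] by blast
      have "Im a + Im (b * cis (-(2*x1))) > 0" using x1(2) \<open>- Im a < cmod b\<close> by simp
      then have "0 < r * sin (G x1)" using r(2) by linarith
          then have "sin (G x1) > 0" using r(1) by (simp add: zero_less_mult_iff)
      moreover have "G x1 \<le> 2*pi * of_int k" using xM(2)[OF x1(1)] k by simp
      ultimately show False using rg x1(1) sign_lemma(4)[of k "G x1"] by force
    qed
    show ?thesis using g0 n1 n2 by simp
  qed
qed

definition good :: "(real \<Rightarrow> real \<Rightarrow> real) \<Rightarrow> bool" where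
  "good F \<longleftrightarrow> (\<forall>s x. F s (x + pi) = F s x + pi)
     \<and> (\<exists>K C. K \<ge> 0 \<and> C \<ge> 0 \<and> (\<forall>s s' x x'. \<bar>F s x - F s' x'\<bar> \<le> K * \<bar>x - x'\<bar> + C * \<bar>s - s'\<bar>))
     \<and> (\<forall>s s' x x'. s \<le> s' \<longrightarrow> x \<le> x' \<longrightarrow> F s x \<le> F s' x')
     \<and> (\<forall>s x x'. x < x' \<longrightarrow> F s x < F s x')"

definition sgood :: "(real \<Rightarrow> real \<Rightarrow> real) \<Rightarrow> bool" where
  "sgood F \<longleftrightarrow> good F \<and> (\<forall>s s' x. s < s' \<longrightarrow> F s x < F s' x)"

lemma goodI:
  fixes F :: "real \<Rightarrow> real \<Rightarrow> real"
  assumes "\<And>s x. F s (x + pi) = F s x + pi" "K \<ge> 0" "C \<ge> 0"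
    "\<And>s s' x x'. \<bar>F s x - F s' x'\<bar> \<le> K * \<bar>x - x'\<bar> + C * \<bar>s - s'\<bar>"
    "\<And>s s' x x'. s \<le> s' \<Longrightarrow> x \<le> x' \<Longrightarrow> F s x \<le> F s' x'"
    "\<And>s x x'. x < x' \<Longrightarrow> F s x < F s x'"
  shows "good F"
  unfolding good_def using assms by blast

lemma good_per: "good F \<Longrightarrow> F s (x + pi) = F s x + pi"
  unfolding good_def by simp
lemma good_mono: "good F \<Longrightarrow> s \<le> s' \<Longrightarrow> x \<le> x' \<Longrightarrow> F s x \<le> F s' x'"
  unfolding good_def by simp
lemma good_strict: "good F \<Longrightarrow> x < x' \<Longrightarrow> F s x < F s x'"
  unfolding good_def by simp
lemma good_lip: "good F \<Longrightarrow> \<exists>K C. K \<ge> 0 \<and> C \<ge> 0 \<and> (\<forall>s s' x x'. \<bar>F s x - F s' x'\<bar> \<le> K * \<bar>x - x'\<bar> + C * \<bar>s - s'\<bar>)"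
  unfolding good_def by simp
lemma sgood_good: "sgood F \<Longrightarrow> good F" unfolding sgood_def by simp
lemma sgood_strict: "sgood F \<Longrightarrow> s < s' \<Longrightarrow> F s x < F s' x" unfolding sgood_def by simp

lemma good_id: "good (\<lambda>s x. x)"
  by (rule goodI[where K=1 and C=0]) auto

lemma good_comp:
  assumes "good F" "good H" shows "good (\<lambda>s x. F s (H s x))"
proof -
  obtain K C where KC: "K \<ge> 0" "C \<ge> 0" "\<And>s s' x x'. \<bar>F s x - F s' x'\<bar> \<le> K * \<bar>x - x'\<bar> + C * \<bar>s - s'\<bar>"
    using good_lip[OF assms(1)] by blast
  obtain K' C' where KC': "K' \<ge> 0" "C' \<ge> 0" "\<And>s s' x x'. \<bar>H s x - H s' x'\<bar> \<le> K' * \<bar>x - x'\<bar> + C' * \<bar>s - s'\<bar>"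
    using good_lip[OF assms(2)] by blast
  show ?thesis
  proof (rule goodI[where K="K*K'" and C="K*C' + C"])
    fix s s' x x' :: real
    have "\<bar>F s (H s x) - F s' (H s' x')\<bar> \<le> K * \<bar>H s x - H s' x'\<bar> + C * \<bar>s - s'\<bar>" by (rule KC(3))
    also have "\<dots> \<le> K * (K' * \<bar>x - x'\<bar> + C' * \<bar>s - s'\<bar>) + C * \<bar>s - s'\<bar>"
      using KC'(3)[of s x s' x'] KC(1) by (simp add: mult_left_mono)
    finally show "\<bar>F s (H s x) - F s' (H s' x')\<bar> \<le> (K*K') * \<bar>x - x'\<bar> + (K*C' + C) * \<bar>s - s'\<bar>"
      by (simp add: algebra_simps)
  next
    fix s x show "F s (H s (x + pi)) = F s (H s x) + pi" using good_per[OF assms(2)] good_per[OF assms(1)] by simp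
  next
    fix s s' x x' :: real assume "s \<le> s'" "x \<le> x'"
    then show "F s (H s x) \<le> F s' (H s' x')" using good_mono[OF assms(1)] good_mono[OF assms(2)] by simp
  next
    fix s x x' :: real assume "x < x'"
    then show "F s (H s x) < F s (H s x')" using good_strict[OF assms(1)] good_strict[OF assms(2)] by simp
  qed (use KC KC' in auto)
qed

lemma sgood_comp1: assumes "sgood F" "good H" shows "sgood (\<lambda>s x. F s (H s x))"
  unfolding sgood_def
proof (intro conjI allI impI)
  show "good (\<lambda>s x. F s (H s x))" using good_comp sgood_good assms by blast
  fix s s' x :: real assume "s < s'"
  have "F s (H s x) < F s' (H s x)" using sgood_strict[OF assms(1) \<open>s < s'\<close>] .
  also have "\<dots> \<le> F s' (H s' x)" using good_mono[OF sgood_good[OF assms(1)], of s' s' "H s x" "H s' x"]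
      good_mono[OF assms(2), of s s' x x] \<open>s < s'\<close> by simp
  finally show "F s (H s x) < F s' (H s' x)" .
qed

lemma sgood_comp2: assumes "good F" "sgood H" shows "sgood (\<lambda>s x. F s (H s x))"
  unfolding sgood_def
proof (intro conjI allI impI)
  show "good (\<lambda>s x. F s (H s x))" using good_comp sgood_good assms by blast
  fix s s' x :: real assume "s < s'"
  have "F s (H s x) < F s (H s' x)" using good_strict[OF assms(1) sgood_strict[OF assms(2) \<open>s < s'\<close>]] .
  also have "\<dots> \<le> F s' (H s' x)" using good_mono[OF assms(1), of s s' "H s' x" "H s' x"] \<open>s < s'\<close> by simp
  finally show "F s (H s x) < F s' (H s' x)" .
qed

lemma good_trans: assumes "ll \<ge> 0" shows "good (\<lambda>s x. x + ll * s)"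
proof (rule goodI[where K=1 and C=ll])
  fix s s' x x' :: real
  have "\<bar>ll * s - ll * s'\<bar> = ll * \<bar>s - s'\<bar>" using assms by (simp add: abs_mult right_diff_distrib[symmetric])
  moreover have "\<bar>x + ll * s - (x' + ll * s')\<bar> = \<bar>(x - x') + (ll * s - ll * s')\<bar>" by (simp add: algebra_simps)
  moreover have "\<bar>(x - x') + (ll * s - ll * s')\<bar> \<le> \<bar>x - x'\<bar> + \<bar>ll * s - ll * s'\<bar>" by (rule abs_triangle_ineq)
  ultimately show "\<bar>x + ll * s - (x' + ll * s')\<bar> \<le> 1 * \<bar>x - x'\<bar> + ll * \<bar>s - s'\<bar>" by linarith
next
  fix s s' x x' :: real assume "s \<le> s'" "x \<le> x'"
  then show "x + ll * s \<le> x' + ll * s'" using assms by (simp add: add_mono mult_left_mono)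
qed (use assms in auto)

lemma sgood_trans: assumes "ll > 0" shows "sgood (\<lambda>s x. x + ll * s)"
  unfolding sgood_def using good_trans assms by (auto simp: mult_strict_left_mono)

lemma good_hA: assumes "nonexc a" shows "good (\<lambda>s x. hA a x)"
proof (rule goodI[where K="KA a" and C=0])
  fix s s' x x' :: real
  show "\<bar>hA a x - hA a x'\<bar> \<le> KA a * \<bar>x - x'\<bar> + 0 * \<bar>s - s'\<bar>" using hA_lip[OF assms] by simp
qed (use hA_periodic hA_mono[OF assms] hA_mvt(1)[OF assms] KA_pos[OF assms] in auto)

lemma good_step: assumes "nonexc a" "ll \<ge> 0" shows "good (\<lambda>s x. hA a (x + ll * s))"
  using good_comp[OF good_hA[OF assms(1)] good_trans[OF assms(2)]] by simp

lemma sgood_step: assumes "nonexc a" "ll > 0" shows "sgood (\<lambda>s x. hA a (x + ll * s))"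
  using sgood_comp2[OF good_hA[OF assms(1)] sgood_trans[OF assms(2)]] by simp

lemma arep_cong: "arep M F \<Longrightarrow> (\<And>x. F x = F' x) \<Longrightarrow> arep M F'"
  unfolding arep_def by simp

fun FT :: "(nat \<Rightarrow> real) \<Rightarrow> (nat \<Rightarrow> real) \<Rightarrow> nat \<Rightarrow> real \<Rightarrow> real \<Rightarrow> real" where
  "FT al l 0 s x = x"
| "FT al l (Suc j) s x = hA (al (Suc j)) (FT al l j s x + l (Suc j) * s)"

fun FW :: "(nat \<Rightarrow> real) \<Rightarrow> (nat \<Rightarrow> real) \<Rightarrow> (nat \<Rightarrow> nat) \<Rightarrow> nat \<Rightarrow> real \<Rightarrow> real \<Rightarrow> real" where
  "FW al l ix 0 s x = x"
| "FW al l ix (Suc k) s x = FW al l ix k s (hA (al (ix (Suc k))) (x + l (ix (Suc k)) * s))"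

lemma FT_arep:
  assumes "\<forall>i\<in>{1..j}. nonexc (al i)"
  shows "arep (prodT al l s j) (FT al l j s) \<and> su11 (prodT al l s j)"
  using assms
proof (induction j)
  case 0
  then show ?case using arep_one su11_one by (simp add: arep_def)
next
  case (Suc j)
  have ne: "nonexc (al (Suc j))" using Suc.prems by simp
  have IH: "arep (prodT al l s j) (FT al l j s)" "su11 (prodT al l s j)" using Suc by auto
  have "arep (matA (al (Suc j)) ** matB (l (Suc j)) s ** prodT al l s j) ((hA (al (Suc j)) \<circ> (\<lambda>x. x + l (Suc j) * s)) \<circ> FT al l j s)"
    by (intro arep_comp arep_A'[OF ne] arep_B IH(1))
  then have "arep (prodT al l s (Suc j)) ((hA (al (Suc j)) \<circ> (\<lambda>x. x + l (Suc j) * s)) \<circ> FT al l j s)" by simp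
  then have "arep (prodT al l s (Suc j)) (FT al l (Suc j) s)" by (rule arep_cong) simp
  moreover have "su11 (prodT al l s (Suc j))" using su11_mult su11_A'[OF ne] su11_B IH(2) by simp
  ultimately show ?case by (rule conjI)
qed

lemma FW_arep:
  assumes "\<forall>i\<in>{1..k}. nonexc (al (ix i))" "\<And>i. ix i = cyc n (int e - int i)"
  shows "arep (prodW n al l s e k) (FW al l ix k s) \<and> su11 (prodW n al l s e k)"
  using assms(1)
proof (induction k)
  case 0
  then show ?case using arep_one su11_one by (simp add: arep_def)
next
  case (Suc k)
  have ne: "nonexc (al (ix (Suc k)))" using Suc.prems by simp
  have IH: "arep (prodW n al l s e k) (FW al l ix k s)" "su11 (prodW n al l s e k)" using Suc by auto
  have "arep (prodW n al l s e k ** matA (al (ix (Suc k))) ** matB (l (ix (Suc k))) s) ((FW al l ix k s \<circ> hA (al (ix (Suc k)))) \<circ> (\<lambda>x. x + l (ix (Suc k)) * s))"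
    by (intro arep_comp arep_A'[OF ne] arep_B IH(1))
  moreover have pw: "prodW n al l s e (Suc k) = prodW n al l s e k ** matA (al (ix (Suc k))) ** matB (l (ix (Suc k))) s"
    by (simp only: prodW.simps assms(2))
  ultimately have "arep (prodW n al l s e (Suc k)) ((FW al l ix k s \<circ> hA (al (ix (Suc k)))) \<circ> (\<lambda>x. x + l (ix (Suc k)) * s))"
    by simp
  then have "arep (prodW n al l s e (Suc k)) (FW al l ix (Suc k) s)" by (rule arep_cong) simp
  moreover have "su11 (prodW n al l s e (Suc k))" unfolding pw by (intro su11_mult su11_A'[OF ne] su11_B IH(2))
  ultimately show ?case by (rule conjI)
qed

lemma FT_good:
  assumes "\<forall>i\<in>{1..j}. nonexc (al i) \<and> l i > 0"
  shows "good (FT al l j) \<and> (j \<ge> 1 \<longrightarrow> sgood (FT al l j))"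
  using assms
proof (induction j)
  case 0
  have "FT al l 0 = (\<lambda>s x. x)" by (simp add: fun_eq_iff)
  then show ?case using good_id by simp
next
  case (Suc j)
  have ne: "nonexc (al (Suc j))" "l (Suc j) > 0" using Suc.prems by auto
  have IH: "good (FT al l j)" using Suc by auto
  have e: "FT al l (Suc j) = (\<lambda>s x. (\<lambda>s x. hA (al (Suc j)) (x + l (Suc j) * s)) s (FT al l j s x))"
    by (simp add: fun_eq_iff)
  have "sgood (FT al l (Suc j))" unfolding e by (rule sgood_comp1[OF sgood_step[OF ne] IH])
  then show ?case using sgood_good by blast
qed

lemma FW_good:
  assumes "\<forall>i\<in>{1..k}. nonexc (al (ix i)) \<and> l (ix i) > 0"
  shows "good (FW al l ix k)"
  using assms
proof (induction k)
  case 0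
  have "FW al l ix 0 = (\<lambda>s x. x)" by (simp add: fun_eq_iff)
  then show ?case using good_id by simp
next
  case (Suc k)
  have ne: "nonexc (al (ix (Suc k)))" "l (ix (Suc k)) \<ge> 0" using Suc.prems by (auto intro: less_imp_le)
  have IH: "good (FW al l ix k)" using Suc by auto
  have e: "FW al l ix (Suc k) = (\<lambda>s x. FW al l ix k s ((\<lambda>s x. hA (al (ix (Suc k))) (x + l (ix (Suc k)) * s)) s x))"
    by (simp add: fun_eq_iff)
  show ?case unfolding e by (rule good_comp[OF IH good_step[OF ne]])
qed

lemma FT_lmono:
  assumes "\<forall>i\<in>{1..j}. nonexc (al i)" "\<forall>i\<in>{1..j}. l i \<le> l' i" "s \<ge> 0"
  shows "FT al l j s x \<le> FT al l' j s x"
  using assms(1,2)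
proof (induction j)
  case (Suc j)
  have ne: "nonexc (al (Suc j))" using Suc.prems by simp
  have "l (Suc j) * s \<le> l' (Suc j) * s" using Suc.prems assms(3) by (simp add: mult_right_mono)
  moreover have "FT al l j s x \<le> FT al l' j s x" using Suc by auto
  ultimately show ?case using hA_mono[OF ne] by simp
qed simp

lemma FW_lmono:
  assumes "\<forall>i\<in>{1..k}. nonexc (al (ix i)) \<and> l (ix i) > 0" "\<forall>i\<in>{1..k}. l (ix i) \<le> l' (ix i)" "s \<ge> 0"
  shows "FW al l ix k s x \<le> FW al l' ix k s x"
  using assms(1,2)
proof (induction k arbitrary: x)
  case (Suc k)
  have ne: "nonexc (al (ix (Suc k)))" using Suc.prems by simp
  have g: "good (FW al l ix k)" using FW_good[of k al ix l] Suc.prems by auto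
  have "l (ix (Suc k)) * s \<le> l' (ix (Suc k)) * s" using Suc.prems assms(3) by (simp add: mult_right_mono)
  then have "hA (al (ix (Suc k))) (x + l (ix (Suc k)) * s) \<le> hA (al (ix (Suc k))) (x + l' (ix (Suc k)) * s)"
    using hA_mono[OF ne] by simp
  then have "FW al l ix k s (hA (al (ix (Suc k))) (x + l (ix (Suc k)) * s)) \<le> FW al l ix k s (hA (al (ix (Suc k))) (x + l' (ix (Suc k)) * s))"
    using good_mono[OF g] by simp
  also have "\<dots> \<le> FW al l' ix k s (hA (al (ix (Suc k))) (x + l' (ix (Suc k)) * s))" using Suc by auto
  finally show ?case by simp
qed simp

lemma FT_zero: "FT al l j 0 x = FT al l' j 0 x"
  by (induction j) auto

lemma FW_zero: "FW al l ix k 0 x = FW al l' ix k 0 x"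
  by (induction k arbitrary: x) auto

lemma FT_lower:
  assumes "s \<ge> 0"
  shows "FT al l j s x \<ge> x + (\<Sum>i=1..j. l i) * s - real j * pi / 2"
proof (induction j)
  case (Suc j)
  have "FT al l (Suc j) s x > FT al l j s x + l (Suc j) * s - pi/2" using hA_lower by simp
  moreover have "(\<Sum>i=1..Suc j. l i) = (\<Sum>i=1..j. l i) + l (Suc j)" by simp
  then have "x + (\<Sum>i=1..Suc j. l i) * s - real (Suc j) * pi / 2 = (x + (\<Sum>i=1..j. l i) * s - real j * pi/2) + l (Suc j) * s - pi/2"
    by (simp add: algebra_simps)
  ultimately show ?case using Suc by linarith
qed simp

lemma FW_lower:
  assumes "\<forall>i\<in>{1..k}. nonexc (al (ix i)) \<and> l (ix i) > 0" "s \<ge> 0"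
  shows "FW al l ix k s x \<ge> x - real k * pi / 2"
  using assms(1)
proof (induction k arbitrary: x)
  case (Suc k)
  have g: "good (FW al l ix k)" using FW_good[of k al ix l] Suc.prems by auto
  have "l (ix (Suc k)) > 0" using Suc.prems by auto
  then have "l (ix (Suc k)) * s \<ge> 0" using assms(2) by simp
  then have "hA (al (ix (Suc k))) (x + l (ix (Suc k)) * s) \<ge> x - pi/2"
    using hA_lower[where a="al (ix (Suc k))" and y="x + l (ix (Suc k)) * s"] by linarith
  then have "FW al l ix k s (hA (al (ix (Suc k))) (x + l (ix (Suc k)) * s)) \<ge> FW al l ix k s (x - pi/2)"
    using good_mono[OF g] by simp
  moreover have "FW al l ix k s (x - pi/2) \<ge> x - pi/2 - real k * pi / 2" using Suc by auto
  moreover have "x - real (Suc k) * pi / 2 = x - pi/2 - real k * pi/2" by (simp add: algebra_simps)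
  moreover have "FW al l ix (Suc k) s x = FW al l ix k s (hA (al (ix (Suc k))) (x + l (ix (Suc k)) * s))" by simp
  ultimately show ?case by linarith
qed simp

lemma lip_cont:
  fixes f :: "real \<Rightarrow> real"
  assumes "C \<ge> 0" "\<And>x y. \<bar>f x - f y\<bar> \<le> C * \<bar>x - y\<bar>"
  shows "continuous_on U f"
proof (rule lipschitz_on_continuous_on)
  show "C-lipschitz_on U f" using assms by (intro lipschitz_onI) (auto simp: dist_real_def)
qed

definition amin :: "(real \<Rightarrow> real) \<Rightarrow> real" where
  "amin f = (SOME x. x \<in> {0..pi} \<and> (\<forall>y\<in>{0..pi}. f x \<le> f y))"
definition amax :: "(real \<Rightarrow> real) \<Rightarrow> real" where
  "amax f = (SOME x. x \<in> {0..pi} \<and> (\<forall>y\<in>{0..pi}. f y \<le> f x))"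

lemma amin: assumes "continuous_on {0..pi} f" shows "amin f \<in> {0..pi} \<and> (\<forall>y\<in>{0..pi}. f (amin f) \<le> f y)"
proof -
  have "\<exists>x. x \<in> {0..pi} \<and> (\<forall>y\<in>{0..pi}. f x \<le> f y)"
    using continuous_attains_inf[OF compact_Icc _ assms] by auto
  then show ?thesis unfolding amin_def by (rule someI_ex)
qed

lemma amax: assumes "continuous_on {0..pi} f" shows "amax f \<in> {0..pi} \<and> (\<forall>y\<in>{0..pi}. f y \<le> f (amax f))"
proof -
  have "\<exists>x. x \<in> {0..pi} \<and> (\<forall>y\<in>{0..pi}. f y \<le> f x)"
    using continuous_attains_sup[OF compact_Icc _ assms] by auto
  then show ?thesis unfolding amax_def by (rule someI_ex)
qed

definition gmin :: "(real \<Rightarrow> real \<Rightarrow> real) \<Rightarrow> real \<Rightarrow> real" where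
  "gmin F s = F s (amin (\<lambda>x. F s x - x)) - amin (\<lambda>x. F s x - x)"
definition gmax :: "(real \<Rightarrow> real \<Rightarrow> real) \<Rightarrow> real \<Rightarrow> real" where
  "gmax F s = F s (amax (\<lambda>x. F s x - x)) - amax (\<lambda>x. F s x - x)"

lemma good_G_cont: assumes "good F" shows "continuous_on U (\<lambda>x. F s x - x)"
proof -
  obtain K C where KC: "K \<ge> 0" "C \<ge> 0" "\<And>s s' x x'. \<bar>F s x - F s' x'\<bar> \<le> K * \<bar>x - x'\<bar> + C * \<bar>s - s'\<bar>"
    using good_lip[OF assms] by blast
  show ?thesis
  proof (rule lip_cont[where C="K+1"])
    fix x y :: real
    have "\<bar>(F s x - x) - (F s y - y)\<bar> \<le> \<bar>F s x - F s y\<bar> + \<bar>x - y\<bar>" by linarith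
    also have "\<dots> \<le> K * \<bar>x - y\<bar> + \<bar>x - y\<bar>" using KC(3)[of s x s y] by simp
    finally show "\<bar>(F s x - x) - (F s y - y)\<bar> \<le> (K + 1) * \<bar>x - y\<bar>" by (simp add: algebra_simps)
  qed (use KC in auto)
qed

lemma gmin_props: assumes "good F"
  shows "amin (\<lambda>x. F s x - x) \<in> {0..pi}" "\<And>y. y \<in> {0..pi} \<Longrightarrow> gmin F s \<le> F s y - y"
  using amin[OF good_G_cont[OF assms]] unfolding gmin_def by auto

lemma gmax_props: assumes "good F"
  shows "amax (\<lambda>x. F s x - x) \<in> {0..pi}" "\<And>y. y \<in> {0..pi} \<Longrightarrow> F s y - y \<le> gmax F s"
  using amax[OF good_G_cont[OF assms]] unfolding gmax_def by auto

lemma gmin_strict: assumes "sgood F" "s < s'" shows "gmin F s < gmin F s'"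
proof -
  have g: "good F" using assms sgood_good by blast
  let ?x = "amin (\<lambda>x. F s' x - x)"
  have "gmin F s \<le> F s ?x - ?x" using gmin_props[OF g] by blast
  also have "\<dots> < F s' ?x - ?x" using sgood_strict[OF assms] by simp
  also have "\<dots> = gmin F s'" unfolding gmin_def ..
  finally show ?thesis .
qed

lemma gmax_strict: assumes "sgood F" "s < s'" shows "gmax F s < gmax F s'"
proof -
  have g: "good F" using assms sgood_good by blast
  let ?x = "amax (\<lambda>x. F s x - x)"
  have "gmax F s = F s ?x - ?x" unfolding gmax_def ..
  also have "\<dots> < F s' ?x - ?x" using sgood_strict[OF assms] by simp
  also have "\<dots> \<le> gmax F s'" using gmax_props[OF g] by blast
  finally show ?thesis .
qed

lemma gmin_cont: assumes "good F" shows "continuous_on UNIV (gmin F)"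
proof -
  obtain K C where KC: "K \<ge> 0" "C \<ge> 0" "\<And>s s' x x'. \<bar>F s x - F s' x'\<bar> \<le> K * \<bar>x - x'\<bar> + C * \<bar>s - s'\<bar>"
    using good_lip[OF assms] by blast
  have one: "gmin F s' \<le> gmin F s + C * \<bar>s - s'\<bar>" for s s'
  proof -
    let ?x = "amin (\<lambda>x. F s x - x)"
    have "gmin F s' \<le> F s' ?x - ?x" using gmin_props[OF assms] by blast
    also have "\<dots> \<le> F s ?x - ?x + C * \<bar>s - s'\<bar>" using KC(3)[of s ?x s' ?x] by simp
    also have "F s ?x - ?x = gmin F s" unfolding gmin_def ..
    finally show ?thesis .
  qed
  show ?thesis
  proof (rule lip_cont[where C=C])
    fix x y :: real
    show "\<bar>gmin F x - gmin F y\<bar> \<le> C * \<bar>x - y\<bar>" using one[of x y] one[of y x] by (simp add: abs_minus_commute abs_le_iff)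
  qed (use KC in auto)
qed

lemma gmax_cont: assumes "good F" shows "continuous_on UNIV (gmax F)"
proof -
  obtain K C where KC: "K \<ge> 0" "C \<ge> 0" "\<And>s s' x x'. \<bar>F s x - F s' x'\<bar> \<le> K * \<bar>x - x'\<bar> + C * \<bar>s - s'\<bar>"
    using good_lip[OF assms] by blast
  have one: "gmax F s \<le> gmax F s' + C * \<bar>s - s'\<bar>" for s s'
  proof -
    let ?x = "amax (\<lambda>x. F s x - x)"
    have "gmax F s = F s ?x - ?x" unfolding gmax_def ..
    also have "\<dots> \<le> F s' ?x - ?x + C * \<bar>s - s'\<bar>" using KC(3)[of s ?x s' ?x] by simp
    also have "F s' ?x - ?x \<le> gmax F s'" using gmax_props[OF assms] by blast
    finally show ?thesis by simp
  qed
  show ?thesis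
  proof (rule lip_cont[where C=C])
    fix x y :: real
    show "\<bar>gmax F x - gmax F y\<bar> \<le> C * \<bar>x - y\<bar>" using one[of x y] one[of y x] by (simp add: abs_minus_commute abs_le_iff)
  qed (use KC in auto)
qed

lemma gmin_le: assumes "good F" "good F'" "\<And>x. x \<in> {0..pi} \<Longrightarrow> F s x \<le> F' s x" shows "gmin F s \<le> gmin F' s"
proof -
  let ?x = "amin (\<lambda>x. F' s x - x)"
  have "gmin F s \<le> F s ?x - ?x" using gmin_props[OF assms(1)] gmin_props(1)[OF assms(2)] by blast
  also have "\<dots> \<le> F' s ?x - ?x" using assms(3) gmin_props(1)[OF assms(2)] by simp
  also have "\<dots> = gmin F' s" unfolding gmin_def ..
  finally show ?thesis .
qed

lemma gmax_le: assumes "good F" "good F'" "\<And>x. x \<in> {0..pi} \<Longrightarrow> F s x \<le> F' s x" shows "gmax F s \<le> gmax F' s"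
proof -
  let ?x = "amax (\<lambda>x. F s x - x)"
  have "gmax F s = F s ?x - ?x" unfolding gmax_def ..
  also have "\<dots> \<le> F' s ?x - ?x" using assms(3) gmax_props(1)[OF assms(1)] by simp
  also have "\<dots> \<le> gmax F' s" using gmax_props[OF assms(2)] gmax_props(1)[OF assms(1)] by blast
  finally show ?thesis .
qed

lemma gmin_eq: assumes "\<And>x. F s x = F' s x" shows "gmin F s = gmin F' s"
proof -
  have "F s = F' s" using assms by (simp add: fun_eq_iff)
  then show ?thesis unfolding gmin_def by simp
qed

lemma gmax_eq: assumes "\<And>x. F s x = F' s x" shows "gmax F s = gmax F' s"
proof -
  have "F s = F' s" using assms by (simp add: fun_eq_iff)
  then show ?thesis unfolding gmax_def by simp
qed

lemma gmin_lower: assumes "good F" "\<And>x. F s x - x \<ge> L" shows "gmin F s \<ge> L"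
  using assms(2) unfolding gmin_def by simp

lemma count_crossings:
  fixes g :: "real \<Rightarrow> real" and c p s :: real
  assumes mono: "\<And>t t'. t < t' \<Longrightarrow> g t < g t'" and cont: "continuous_on UNIV g"
    and s: "s \<ge> 0" and p: "p > 0"
  shows "finite {t. 0 < t \<and> t \<le> s \<and> (\<exists>k::int. g t = c + p * of_int k)}"
    "card {t. 0 < t \<and> t \<le> s \<and> (\<exists>k::int. g t = c + p * of_int k)} = nat (\<lfloor>(g s - c)/p\<rfloor> - \<lfloor>(g 0 - c)/p\<rfloor>)"
proof -
  define A where "A = {t. 0 < t \<and> t \<le> s \<and> (\<exists>k::int. g t = c + p * of_int k)}"
  define B where "B = {k::int. g 0 < c + p * of_int k \<and> c + p * of_int k \<le> g s}"
  define phi where "phi t = \<lfloor>(g t - c)/p\<rfloor>" for t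
  have mono': "g t \<le> g t'" if "t \<le> t'" for t t' using mono[of t t'] that by (cases "t = t'") auto
  have ph: "g t = c + p * of_int (phi t)" if ex: "\<exists>k::int. g t = c + p * of_int k" for t
  proof -
    obtain k::int where k: "g t = c + p * of_int k" using ex by blast
    have "(g t - c)/p = of_int k" using k p by simp
    then have "phi t = k" unfolding phi_def by simp
    then show ?thesis using k by simp
  qed
  have bij: "bij_betw phi A B"
  proof (rule bij_betw_imageI)
    show "inj_on phi A"
    proof
      fix t t' assume t: "t \<in> A" "t' \<in> A" "phi t = phi t'"
      have e1: "\<exists>k::int. g t = c + p * of_int k" using t(1) unfolding A_def by blast
      have e2: "\<exists>k::int. g t' = c + p * of_int k" using t(2) unfolding A_def by blast
      have "g t = g t'" using ph[OF e1] ph[OF e2] t(3) by simp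
      then show "t = t'" using mono by (metis linorder_neqE_linordered_idom less_irrefl)
    qed
    show "phi ` A = B"
    proof (intro set_eqI iffI)
      fix k assume "k \<in> phi ` A"
      then obtain t where t: "t \<in> A" "k = phi t" by blast
      have "g 0 < g t" using t mono unfolding A_def by auto
      moreover have "g t \<le> g s" using t mono' unfolding A_def by auto
      moreover have "\<exists>k::int. g t = c + p * of_int k" using t(1) unfolding A_def by blast
      then have "g t = c + p * of_int k" using ph t(2) by blast
      ultimately show "k \<in> B" unfolding B_def by simp
    next
      fix k assume "k \<in> B"
      then have kb: "g 0 < c + p * of_int k" "c + p * of_int k \<le> g s" unfolding B_def by auto
      have "continuous_on {0..s} g" using cont by (rule continuous_on_subset) auto
      then obtain t where t: "0 \<le> t" "t \<le> s" "g t = c + p * of_int k"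
        using IVT'[of g 0 "c + p * of_int k" s] kb s by auto
      have "t \<noteq> 0" using t kb by auto
      then have tA: "t \<in> A" using t unfolding A_def by auto
      have "phi t = k" using ph[of t] t(3) p unfolding phi_def by simp
      then show "k \<in> phi ` A" using tA by blast
    qed
  qed
  have Beq: "B = {\<lfloor>(g 0 - c)/p\<rfloor><..\<lfloor>(g s - c)/p\<rfloor>}"
  proof (intro set_eqI)
    fix k :: int
    have "g 0 < c + p * of_int k \<longleftrightarrow> (g 0 - c)/p < of_int k" using p by (simp add: field_simps)
    moreover have "c + p * of_int k \<le> g s \<longleftrightarrow> of_int k \<le> (g s - c)/p" using p by (simp add: field_simps)
    ultimately show "k \<in> B \<longleftrightarrow> k \<in> {\<lfloor>(g 0 - c)/p\<rfloor><..\<lfloor>(g s - c)/p\<rfloor>}"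
      unfolding B_def by (simp add: floor_less_iff le_floor_iff)
  qed
  have fB: "finite B" unfolding Beq by simp
  show "finite A" using bij_betw_finite[OF bij] fB unfolding A_def by simp
  show "card A = nat (\<lfloor>(g s - c)/p\<rfloor> - \<lfloor>(g 0 - c)/p\<rfloor>)"
    using bij_betw_same_card[OF bij] Beq by simp
qed

lemma arep_first:
  assumes "arep (mat2 a b (cnj b) (cnj a)) F"
  shows "\<exists>r>0. a * cis x + b * cnj (cis x) = of_real r * cis (x + (F x - x))"
proof -
  obtain r where r: "r > 0" "mat2 a b (cnj b) (cnj a) *v vec2 (cis x) (cnj (cis x)) = vec2 (of_real r * cis (F x)) (cnj (of_real r * cis (F x)))"
    using assms unfolding arep_def by blast
  then have "a * cis x + b * cnj (cis x) = of_real r * cis (F x)" unfolding su11_vec vec2_eq_iff by simp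
  then show ?thesis using r(1) by auto
qed

lemma mult_via_gmin:
  assumes su: "su11 M" and ar: "arep M (F s)" and g: "good F"
  shows "geom_mult1 M = of_bool (\<exists>k::int. gmin F s = 2*pi * of_int k) + of_bool (\<exists>k::int. gmax F s = 2*pi * of_int k)"
proof -
  obtain a b where ab: "M = mat2 a b (cnj b) (cnj a)" "(cmod a)^2 - (cmod b)^2 = 1" using su su11_def by blast
  define G where "G x = F s x - x" for x
  have rep: "\<And>x. x \<in> {0..pi} \<Longrightarrow> \<exists>r>0. a * cis x + b * cnj (cis x) = of_real r * cis (x + G x)"
    using arep_first[of a b "F s"] ar ab(1) unfolding G_def by blast
  have cont: "continuous_on {0..pi} G" unfolding G_def by (rule good_G_cont[OF g])
  have Gf: "G = (\<lambda>x. F s x - x)" unfolding G_def by (simp add: fun_eq_iff)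
  define xm where "xm = amin (\<lambda>x. F s x - x)"
  define xM where "xM = amax (\<lambda>x. F s x - x)"
  have xm: "xm \<in> {0..pi}" "\<And>x. x \<in> {0..pi} \<Longrightarrow> G xm \<le> G x"
    using amin[OF cont[unfolded Gf]] unfolding xm_def G_def by auto
  have xM: "xM \<in> {0..pi}" "\<And>x. x \<in> {0..pi} \<Longrightarrow> G x \<le> G xM"
    using amax[OF cont[unfolded Gf]] unfolding xM_def G_def by auto
  have "geom_mult1 M = (if \<exists>k::int. G xm = 2*pi * of_int k then 1 else 0) + (if \<exists>k::int. G xM = 2*pi * of_int k then 1 else 0)"
    unfolding ab(1) by (rule core[OF ab(2) rep cont xm xM])
  moreover have "G xm = gmin F s" "G xM = gmax F s" unfolding G_def xm_def xM_def gmin_def gmax_def by simp_all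
  ultimately show ?thesis by simp
qed

lemma matB_zero: "matB l 0 = mat 1"
  unfolding matB_def mat1_eq by simp

lemma prodT_zero: "prodT al l 0 j = prodT al l' 0 j"
  by (induction j) (simp_all add: matB_zero)

lemma count_set_eq: "{t. 0 < t \<and> t \<le> s \<and> (\<exists>k::int. g t = 0 + 2*pi * of_int k)} = {t. 0 < t \<and> t \<le> s \<and> (\<exists>k::int. g t = 2*pi * of_int k)}"
  by simp

lemma count_nonexc:
  fixes n :: nat and al l :: "nat \<Rightarrow> real"
  assumes n: "n \<ge> 1" and ang: "\<forall>j\<in>{1..n}. nonexc (al j)" and lp: "\<forall>j\<in>{1..n}. l j > 0"
    and E: "exc_vertices n al = {}" and s: "s \<ge> 0"
  shows "qe_count n al l s = qe_mult n al l 0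
     + nat (\<lfloor>(gmin (FT al l n) s - 0)/(2*pi)\<rfloor> - \<lfloor>(gmin (FT al l n) 0 - 0)/(2*pi)\<rfloor>)
     + nat (\<lfloor>(gmax (FT al l n) s - 0)/(2*pi)\<rfloor> - \<lfloor>(gmax (FT al l n) 0 - 0)/(2*pi)\<rfloor>)"
proof -
  define F where "F = FT al l n"
  have hyp: "\<forall>i\<in>{1..n}. nonexc (al i) \<and> l i > 0" using ang lp by auto
  have sg: "sgood F" unfolding F_def using FT_good[OF hyp] n by auto
  have g: "good F" using sg sgood_good by blast
  define A where "A t = (\<exists>k::int. gmin F t = 2*pi * of_int k)" for t
  define B where "B t = (\<exists>k::int. gmax F t = 2*pi * of_int k)" for t
  have gm: "geom_mult1 (matT n al l t) = of_bool (A t) + of_bool (B t)" for t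
  proof -
    have "arep (prodT al l t n) (FT al l n t) \<and> su11 (prodT al l t n)" using FT_arep ang by blast
    then show ?thesis unfolding matT_def A_def B_def F_def using mult_via_gmin[OF _ _ FT_good[OF hyp, THEN conjunct1]] by blast
  qed
  define qm where "qm t = qe_mult n al l t" for t
  have qpos: "qm t = of_bool (A t) + of_bool (B t)" if "t > 0" for t
    using that unfolding qm_def qe_mult_def using E gm[of t] by auto
  define SA where "SA = {t. 0 < t \<and> t \<le> s \<and> A t}"
  define SB where "SB = {t. 0 < t \<and> t \<le> s \<and> B t}"
  have pp: "2*pi > (0::real)" by simp
  have cA: "finite SA" "card SA = nat (\<lfloor>(gmin F s - 0)/(2*pi)\<rfloor> - \<lfloor>(gmin F 0 - 0)/(2*pi)\<rfloor>)"
    using count_crossings[OF gmin_strict[OF sg] gmin_cont[OF g] s pp, of 0] unfolding SA_def A_def count_set_eq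
    by auto
  have cB: "finite SB" "card SB = nat (\<lfloor>(gmax F s - 0)/(2*pi)\<rfloor> - \<lfloor>(gmax F 0 - 0)/(2*pi)\<rfloor>)"
    using count_crossings[OF gmax_strict[OF sg] gmax_cont[OF g] s pp, of 0] unfolding SB_def B_def count_set_eq
    by auto
  define S where "S = {t. 0 \<le> t \<and> t \<le> s \<and> 0 < qm t}"
  define U where "U = insert 0 (SA \<union> SB)"
  have fU: "finite U" unfolding U_def using cA cB by simp
  have SU: "S \<subseteq> U"
  proof
    fix t assume "t \<in> S"
    then have t: "0 \<le> t" "t \<le> s" "0 < qm t" unfolding S_def by auto
    show "t \<in> U"
    proof (cases "t = 0")
      case False
      then have "t > 0" using t by simp
      then have "A t \<or> B t" using qpos t(3) by fastforce
      then show ?thesis unfolding U_def SA_def SB_def using t \<open>t > 0\<close> by auto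
    qed (simp add: U_def)
  qed
  have "qe_count n al l s = sum qm S" unfolding qe_count_def S_def qm_def ..
  also have "\<dots> = sum qm U"
  proof (rule sum.mono_neutral_left[OF fU SU])
    show "\<forall>i\<in>U - S. qm i = 0"
    proof
      fix t assume "t \<in> U - S"
      moreover have "0 \<le> t \<and> t \<le> s" if "t \<in> U" using that s unfolding U_def SA_def SB_def by auto
      ultimately show "qm t = 0" unfolding S_def by auto
    qed
  qed
  also have "\<dots> = qm 0 + sum qm (SA \<union> SB)"
    unfolding U_def by (rule sum.insert) (use cA cB in \<open>auto simp: SA_def SB_def\<close>)
  also have "sum qm (SA \<union> SB) = (\<Sum>t\<in>SA \<union> SB. of_bool (A t)) + (\<Sum>t\<in>SA \<union> SB. of_bool (B t))"
    unfolding sum.distrib[symmetric] by (rule sum.cong) (auto simp: SA_def SB_def qpos)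
  also have "(\<Sum>t\<in>SA \<union> SB. of_bool (A t)) = card ((SA \<union> SB) \<inter> {t. A t})" using cA cB by simp
  also have "(SA \<union> SB) \<inter> {t. A t} = SA" unfolding SA_def SB_def by auto
  also have "(\<Sum>t\<in>SA \<union> SB. of_bool (B t)) = card ((SA \<union> SB) \<inter> {t. B t})" using cA cB by simp
  also have "(SA \<union> SB) \<inter> {t. B t} = SB" unfolding SA_def SB_def by auto
  finally show ?thesis using cA cB unfolding qm_def F_def by simp
qed

lemma count_exc_generic:
  fixes g :: "nat \<Rightarrow> real \<Rightarrow> real" and c :: "nat \<Rightarrow> real" and P :: "nat \<Rightarrow> real \<Rightarrow> bool" and qm :: "real \<Rightarrow> nat"
  assumes fE: "finite E"
    and mono: "\<And>e t t'. e \<in> E \<Longrightarrow> t < t' \<Longrightarrow> g e t < g e t'"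
    and cont: "\<And>e. e \<in> E \<Longrightarrow> continuous_on UNIV (g e)"
    and P: "\<And>e t. e \<in> E \<Longrightarrow> t > 0 \<Longrightarrow> P e t \<longleftrightarrow> (\<exists>k::int. g e t = c e + pi * of_int k)"
    and qm: "\<And>t. t > 0 \<Longrightarrow> qm t = card {e\<in>E. P e t}"
    and s: "s \<ge> 0"
  shows "(\<Sum>t\<in>{t. 0 \<le> t \<and> t \<le> s \<and> 0 < qm t}. qm t) = qm 0 + (\<Sum>e\<in>E. nat (\<lfloor>(g e s - c e)/pi\<rfloor> - \<lfloor>(g e 0 - c e)/pi\<rfloor>))"
proof -
  define Z where "Z e = {t. 0 < t \<and> t \<le> s \<and> P e t}" for e
  have Zeq: "Z e = {t. 0 < t \<and> t \<le> s \<and> (\<exists>k::int. g e t = c e + pi * of_int k)}" if "e \<in> E" for e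
    unfolding Z_def using P[OF that] by auto
  have cZ: "finite (Z e)" "card (Z e) = nat (\<lfloor>(g e s - c e)/pi\<rfloor> - \<lfloor>(g e 0 - c e)/pi\<rfloor>)" if e: "e \<in> E" for e
    unfolding Zeq[OF e] using count_crossings[OF mono[OF e] cont[OF e] s pi_gt_zero] by auto
  define ZZ where "ZZ = (\<Union>e\<in>E. Z e)"
  have fZZ: "finite ZZ" unfolding ZZ_def using fE cZ by auto
  define S where "S = {t. 0 \<le> t \<and> t \<le> s \<and> 0 < qm t}"
  define U where "U = insert 0 ZZ"
  have fU: "finite U" unfolding U_def using fZZ by simp
  have SU: "S \<subseteq> U"
  proof
    fix t assume "t \<in> S"
    then have t: "0 \<le> t" "t \<le> s" "0 < qm t" unfolding S_def by auto
    show "t \<in> U"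
    proof (cases "t = 0")
      case False
      then have "t > 0" using t by simp
      then have "card {e\<in>E. P e t} > 0" using qm t(3) by simp
      then obtain e where "e \<in> E" "P e t" by (metis (mono_tags, lifting) card_gt_0_iff empty_Collect_eq)
      then show ?thesis unfolding U_def ZZ_def Z_def using t \<open>t > 0\<close> by auto
    qed (simp add: U_def)
  qed
  have "sum qm S = sum qm U"
  proof (rule sum.mono_neutral_left[OF fU SU])
    show "\<forall>i\<in>U - S. qm i = 0"
    proof
      fix t assume "t \<in> U - S"
      moreover have "0 \<le> t \<and> t \<le> s" if "t \<in> U" using that s unfolding U_def ZZ_def Z_def by auto
      ultimately show "qm t = 0" unfolding S_def by auto
    qed
  qed
  also have "\<dots> = qm 0 + sum qm ZZ"
    unfolding U_def by (rule sum.insert) (use fZZ in \<open>auto simp: ZZ_def Z_def\<close>)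
  also have "sum qm ZZ = (\<Sum>t\<in>ZZ. \<Sum>e\<in>E. of_bool (P e t))"
  proof (rule sum.cong[OF refl])
    fix t assume "t \<in> ZZ"
    then have "t > 0" unfolding ZZ_def Z_def by auto
    have "(\<Sum>e\<in>E. of_bool (P e t)) = (of_nat (card (E \<inter> {e. P e t})) :: nat)" using fE by simp
    also have "E \<inter> {e. P e t} = {e\<in>E. P e t}" by auto
    finally show "qm t = (\<Sum>e\<in>E. of_bool (P e t))" using qm[OF \<open>t > 0\<close>] by simp
  qed
  also have "\<dots> = (\<Sum>e\<in>E. \<Sum>t\<in>ZZ. of_bool (P e t))" by (rule sum.swap)
  also have "\<dots> = (\<Sum>e\<in>E. card (Z e))"
  proof (rule sum.cong[OF refl])
    fix e assume e: "e \<in> E"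
    have "(\<Sum>t\<in>ZZ. of_bool (P e t)) = (of_nat (card (ZZ \<inter> {t. P e t})) :: nat)" using fZZ by simp
    also have "ZZ \<inter> {t. P e t} = Z e" using e unfolding ZZ_def Z_def by auto
    finally show "(\<Sum>t\<in>ZZ. of_bool (P e t)) = card (Z e)" by simp
  qed
  also have "\<dots> = (\<Sum>e\<in>E. nat (\<lfloor>(g e s - c e)/pi\<rfloor> - \<lfloor>(g e 0 - c e)/pi\<rfloor>))"
    using cZ by (intro sum.cong) auto
  finally show ?thesis unfolding S_def .
qed

lemma cyc_range: assumes "n \<ge> 1" shows "cyc n i \<in> {1..n}"
proof -
  have "(i - 1) mod int n \<ge> 0" "(i - 1) mod int n < int n" using assms by auto
  then show ?thesis unfolding cyc_def by auto
qed

lemma cyc_self: assumes "n \<ge> 1" "e \<in> {1..n}" shows "cyc n (int e - int n) = e"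
proof -
  have "int e - int n - 1 = (int e - 1) - int n" by simp
  then have "(int e - int n - 1) mod int n = (int e - 1) mod int n" by (simp only: minus_mod_self2)
  also have "\<dots> = int e - 1" using assms by (intro mod_pos_pos_trivial) auto
  finally show ?thesis unfolding cyc_def using assms by auto
qed

definition ph :: "real \<Rightarrow> real" where "ph a = (if parityO a = 1 then - pi/4 else pi/4)"

lemma Xvec_form: "Xvec a = vec2 (of_real (1/sqrt 2) * cis (ph a)) (cnj (of_real (1/sqrt 2) * cis (ph a)))"
  unfolding Xvec_def ph_def Xeven_def Xodd_def by (simp add: cis_cnj)

lemma herm_zero:
  assumes ar: "arep (mat2 a b (cnj b) (cnj a)) F" and c: "c \<noteq> 0"
  shows "herm (mat2 a b (cnj b) (cnj a) *v vec2 (of_real c * cis u) (cnj (of_real c * cis u))) (vec2 (of_real c * cis w) (cnj (of_real c * cis w))) = 0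
     \<longleftrightarrow> cos (F u - w) = 0"
proof -
  obtain r where r: "r > 0" "mat2 a b (cnj b) (cnj a) *v vec2 (cis u) (cnj (cis u)) = vec2 (of_real r * cis (F u)) (cnj (of_real r * cis (F u)))"
    using ar unfolding arep_def by blast
  have L: "a * cis u + b * cnj (cis u) = of_real r * cis (F u)" using r(2) unfolding su11_vec vec2_eq_iff by simp
  have "a * (of_real c * cis u) + b * cnj (of_real c * cis u) = of_real c * (a * cis u + b * cnj (cis u))"
    by (simp add: algebra_simps)
  also have "\<dots> = of_real (c * r) * cis (F u)" unfolding L by simp
  finally have L2: "a * (of_real c * cis u) + b * cnj (of_real c * cis u) = of_real (c * r) * cis (F u)" .
  have "herm (mat2 a b (cnj b) (cnj a) *v vec2 (of_real c * cis u) (cnj (of_real c * cis u))) (vec2 (of_real c * cis w) (cnj (of_real c * cis w)))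
      = of_real (c * r) * cis (F u) * cnj (of_real c * cis w) + cnj (of_real (c * r) * cis (F u)) * (of_real c * cis w)"
    unfolding su11_vec L2 herm_vec2 by simp
  also have "\<dots> = of_real (2 * c * c * r * cos (F u - w))"
    by (simp add: complex_eq_iff cis_cnj cos_diff sin_diff algebra_simps)
  finally show ?thesis using c r(1) by simp
qed

lemma prev_dist_props:
  assumes n: "n \<ge> 1" and e: "e \<in> exc_vertices n al"
  shows "1 \<le> prev_dist n al e" "prev_dist n al e \<le> n"
    "\<And>k. 1 \<le> k \<Longrightarrow> k < prev_dist n al e \<Longrightarrow> \<not> exceptional (al (cyc n (int e - int k)))"
proof -
  let ?P = "\<lambda>d. d \<ge> 1 \<and> exceptional (al (cyc n (int e - int d)))"
  have en: "e \<in> {1..n}" "exceptional (al e)" using e unfolding exc_vertices_def by auto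
  have Pn: "?P n" using n cyc_self[OF n en(1)] en(2) by simp
  have d: "?P (prev_dist n al e)" unfolding prev_dist_def by (rule LeastI[of ?P n, OF Pn])
  then show "1 \<le> prev_dist n al e" by simp
  show "prev_dist n al e \<le> n" unfolding prev_dist_def by (rule Least_le[of ?P n, OF Pn])
  fix k assume k: "1 \<le> k" "k < prev_dist n al e"
  have "\<not> ?P k" using not_less_Least[of k ?P] k(2) unfolding prev_dist_def by blast
  then show "\<not> exceptional (al (cyc n (int e - int k)))" using k by simp
qed

definition ixe :: "nat \<Rightarrow> nat \<Rightarrow> nat \<Rightarrow> nat" where "ixe n e k = cyc n (int e - int k)"

definition FUe :: "nat \<Rightarrow> (nat \<Rightarrow> real) \<Rightarrow> (nat \<Rightarrow> real) \<Rightarrow> nat \<Rightarrow> real \<Rightarrow> real \<Rightarrow> real" where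
  "FUe n al l e s x = FW al l (ixe n e) (prev_dist n al e - 1) s x + l e * s"

lemma FW_hyp:
  assumes n: "n \<ge> 1" and e: "e \<in> exc_vertices n al" and ang: "\<forall>j\<in>{1..n}. 0 < al j \<and> al j < pi"
    and lp: "\<forall>j\<in>{1..n}. l j > 0"
  shows "\<forall>i\<in>{1..prev_dist n al e - 1}. nonexc (al (ixe n e i)) \<and> l (ixe n e i) > 0"
proof
  fix i assume i: "i \<in> {1..prev_dist n al e - 1}"
  have r: "ixe n e i \<in> {1..n}" unfolding ixe_def by (rule cyc_range[OF n])
  have "i < prev_dist n al e" using prev_dist_props(1)[OF n e] i by auto
  then have "\<not> exceptional (al (ixe n e i))" unfolding ixe_def using prev_dist_props(3)[OF n e, of i] i by auto
  then have "nonexc (al (ixe n e i))" using nonexc_iff ang r by blast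
  then show "nonexc (al (ixe n e i)) \<and> l (ixe n e i) > 0" using lp r by blast
qed

lemma FUe_sgood:
  assumes n: "n \<ge> 1" and e: "e \<in> exc_vertices n al" and ang: "\<forall>j\<in>{1..n}. 0 < al j \<and> al j < pi"
    and lp: "\<forall>j\<in>{1..n}. l j > 0"
  shows "sgood (FUe n al l e)"
proof -
  have le: "l e > 0" using e lp unfolding exc_vertices_def by auto
  have "sgood (\<lambda>s x. (\<lambda>s x. x + l e * s) s (FW al l (ixe n e) (prev_dist n al e - 1) s x))"
    by (rule sgood_comp1[OF sgood_trans[OF le] FW_good[where al=al and l=l and ix="ixe n e" and k="prev_dist n al e - 1", OF FW_hyp[OF n e ang lp]]])
  then show ?thesis unfolding FUe_def[abs_def] by simp
qed

lemma matU_arep: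
  assumes n: "n \<ge> 1" and e: "e \<in> exc_vertices n al" and ang: "\<forall>j\<in>{1..n}. 0 < al j \<and> al j < pi"
    and lp: "\<forall>j\<in>{1..n}. l j > 0"
  shows "arep (matU n al l e s) (FUe n al l e s) \<and> su11 (matU n al l e s)"
proof -
  have h: "\<forall>i\<in>{1..prev_dist n al e - 1}. nonexc (al (ixe n e i))" using FW_hyp[OF n e ang lp] by blast
  have W: "arep (prodW n al l s e (prev_dist n al e - 1)) (FW al l (ixe n e) (prev_dist n al e - 1) s)
      \<and> su11 (prodW n al l s e (prev_dist n al e - 1))"
    by (rule FW_arep[where al=al and ix="ixe n e" and k="prev_dist n al e - 1" and n=n and e=e, OF h]) (simp add: ixe_def)
  have "arep (matB (l e) s ** prodW n al l s e (prev_dist n al e - 1)) ((\<lambda>x. x + l e * s) \<circ> FW al l (ixe n e) (prev_dist n al e - 1) s)"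
    using arep_comp[OF arep_B W[THEN conjunct1]] .
  then have "arep (matU n al l e s) (FUe n al l e s)" unfolding matU_def by (rule arep_cong) (simp add: FUe_def)
  moreover have "su11 (matU n al l e s)" unfolding matU_def using su11_mult su11_B W by blast
  ultimately show ?thesis by simp
qed

lemma exc_cond_iff:
  assumes n: "n \<ge> 1" and e: "e \<in> exc_vertices n al" and ang: "\<forall>j\<in>{1..n}. 0 < al j \<and> al j < pi"
    and lp: "\<forall>j\<in>{1..n}. l j > 0"
  shows "exc_cond n al l e s \<longleftrightarrow>
     (\<exists>k::int. FUe n al l e s (ph (al (prev_exc n al e))) = (ph (al e) + pi/2) + pi * of_int k)"
proof -
  obtain a b where ab: "matU n al l e s = mat2 a b (cnj b) (cnj a)"
    using matU_arep[OF n e ang lp, of s] unfolding su11_def by blast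
  have ar: "arep (mat2 a b (cnj b) (cnj a)) (FUe n al l e s)" using matU_arep[OF n e ang lp, of s] ab by simp
  have c: "1 / sqrt 2 \<noteq> (0::real)" by simp
  have "exc_cond n al l e s \<longleftrightarrow> cos (FUe n al l e s (ph (al (prev_exc n al e))) - ph (al e)) = 0"
    unfolding exc_cond_def ab Xvec_form by (rule herm_zero[OF ar c])
  also have "\<dots> \<longleftrightarrow> (\<exists>k::int. FUe n al l e s (ph (al (prev_exc n al e))) - ph (al e) = of_int k * pi + pi/2)"
    by (rule cos_zero_iff_int2)
  also have "\<dots> \<longleftrightarrow> (\<exists>k::int. FUe n al l e s (ph (al (prev_exc n al e))) = (ph (al e) + pi/2) + pi * of_int k)"
    by (auto simp: algebra_simps)
  finally show ?thesis .
qed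

lemma matU_zero: "matU n al l e 0 = matU n al l' e 0"
proof -
  have "prodW n al l 0 e k = prodW n al l' 0 e k" for k by (induction k) (simp_all add: matB_zero)
  then show ?thesis unfolding matU_def by (simp add: matB_zero)
qed

lemma qe_count_neg: assumes "s < 0" shows "qe_count n al l s = 0"
proof -
  have "{t. 0 \<le> t \<and> t \<le> s \<and> qe_mult n al l t > 0} = {}" using assms by auto
  then show ?thesis unfolding qe_count_def by (simp only: sum.empty)
qed

lemma qe_mult_zero: "qe_mult n al l 0 = qe_mult n al l' 0"
proof -
  have "matT n al l 0 = matT n al l' 0" unfolding matT_def by (rule prodT_zero)
  moreover have "exc_cond n al l e 0 = exc_cond n al l' e 0" for e unfolding exc_cond_def using matU_zero by metis
  ultimately show ?thesis unfolding qe_mult_def by simp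
qed

lemma nat_floor_mono:
  assumes "a \<le> b" "p > 0" shows "nat (\<lfloor>a/p\<rfloor> - K) \<le> nat (\<lfloor>b/p\<rfloor> - K)"
proof -
  have "a/p \<le> b/p" using assms by (simp add: divide_right_mono)
  then have "\<lfloor>a/p\<rfloor> \<le> \<lfloor>b/p\<rfloor>" by (rule floor_mono)
  then show ?thesis by simp
qed

lemma unbounded_aux:
  fixes L D p :: real and K :: int and m :: nat
  assumes "L > 0" "p > 0"
  shows "\<exists>s\<ge>0. \<forall>g. g \<ge> L * s - D \<longrightarrow> m \<le> nat (\<lfloor>g/p\<rfloor> - K)"
proof -
  define s where "s = max 0 ((p * (of_int K + of_nat m + 1) + D) / L)"
  have s0: "s \<ge> 0" unfolding s_def by simp
  have "L * s \<ge> p * (of_int K + of_nat m + 1) + D"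
  proof -
    have "s \<ge> (p * (of_int K + of_nat m + 1) + D) / L" unfolding s_def by simp
    then have "p * (of_int K + of_nat m + 1) + D \<le> s * L" using pos_divide_le_eq[OF assms(1)] by blast
    then show ?thesis by (simp add: mult.commute)
  qed
  have "m \<le> nat (\<lfloor>g/p\<rfloor> - K)" if g: "g \<ge> L * s - D" for g
  proof -
    have "g \<ge> p * (of_int K + of_nat m + 1)" using g \<open>L * s \<ge> _\<close> by linarith
    then have "g / p \<ge> of_int K + of_nat m + 1" using assms(2) by (simp add: field_simps)
    then have "of_int (K + int m + 1) \<le> g / p" by simp
    then have "K + int m + 1 \<le> \<lfloor>g/p\<rfloor>" by (simp add: le_floor_iff)
    then show ?thesis by simp
  qed
  then show ?thesis using s0 by blast
qed

lemma good_cont_s: assumes "good F" shows "continuous_on UNIV (\<lambda>t. F t x)"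
proof -
  obtain K C where KC: "K \<ge> 0" "C \<ge> 0" "\<And>s s' x x'. \<bar>F s x - F s' x'\<bar> \<le> K * \<bar>x - x'\<bar> + C * \<bar>s - s'\<bar>"
    using good_lip[OF assms] by blast
  show ?thesis by (rule lip_cont[where C=C]) (use KC(2) KC(3)[of _ x _ x] in auto)
qed

lemma exc_vertices_finite: "finite (exc_vertices n al)"
  unfolding exc_vertices_def by simp

lemma count_exc:
  fixes n :: nat and al l :: "nat \<Rightarrow> real"
  assumes n: "n \<ge> 1" and ang: "\<forall>j\<in>{1..n}. 0 < al j \<and> al j < pi" and lp: "\<forall>j\<in>{1..n}. l j > 0"
    and E: "exc_vertices n al \<noteq> {}" and s: "s \<ge> 0"
  shows "qe_count n al l s = qe_mult n al l 0 + (\<Sum>e\<in>exc_vertices n al.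
      nat (\<lfloor>(FUe n al l e s (ph (al (prev_exc n al e))) - (ph (al e) + pi/2))/pi\<rfloor>
         - \<lfloor>(FUe n al l e 0 (ph (al (prev_exc n al e))) - (ph (al e) + pi/2))/pi\<rfloor>))"
  unfolding qe_count_def
proof (rule count_exc_generic[where P="exc_cond n al l"])
  show "finite (exc_vertices n al)" by (rule exc_vertices_finite)
  fix e assume e: "e \<in> exc_vertices n al"
  show "\<And>t t'. t < t' \<Longrightarrow> FUe n al l e t (ph (al (prev_exc n al e))) < FUe n al l e t' (ph (al (prev_exc n al e)))"
    using sgood_strict[OF FUe_sgood[OF n e ang lp]] by blast
  show "continuous_on UNIV (\<lambda>t. FUe n al l e t (ph (al (prev_exc n al e))))"
    by (rule good_cont_s[OF sgood_good[OF FUe_sgood[OF n e ang lp]]])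
  fix t :: real assume "t > 0"
  show "exc_cond n al l e t \<longleftrightarrow> (\<exists>k::int. FUe n al l e t (ph (al (prev_exc n al e))) = (ph (al e) + pi/2) + pi * of_int k)"
    by (rule exc_cond_iff[OF n e ang lp])
next
  fix t :: real assume "t > 0"
  then show "qe_mult n al l t = card {e \<in> exc_vertices n al. exc_cond n al l e t}"
    unfolding qe_mult_def using E by simp
qed (use s in auto)

lemma FUe_lmono:
  assumes n: "n \<ge> 1" and e: "e \<in> exc_vertices n al" and ang: "\<forall>j\<in>{1..n}. 0 < al j \<and> al j < pi"
    and lp: "\<forall>j\<in>{1..n}. l j > 0" and le: "\<forall>j\<in>{1..n}. l j \<le> l' j" and s: "s \<ge> 0"
  shows "FUe n al l e s x \<le> FUe n al l' e s x"
proof -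
  have h: "\<forall>i\<in>{1..prev_dist n al e - 1}. l (ixe n e i) \<le> l' (ixe n e i)"
    using le cyc_range[OF n] unfolding ixe_def by blast
  have "FW al l (ixe n e) (prev_dist n al e - 1) s x \<le> FW al l' (ixe n e) (prev_dist n al e - 1) s x"
    by (rule FW_lmono[where al=al and ix="ixe n e" and k="prev_dist n al e - 1", OF FW_hyp[OF n e ang lp] h s])
  moreover have "e \<in> {1..n}" using e unfolding exc_vertices_def by auto
  then have "l e * s \<le> l' e * s" using le s by (simp add: mult_right_mono)
  ultimately show ?thesis unfolding FUe_def by simp
qed

lemma FUe_zero: "FUe n al l e 0 x = FUe n al l' e 0 x"
  unfolding FUe_def using FW_zero by simp

theorem corollary5p32:
  fixes n :: nat and alpha l l' :: "nat \<Rightarrow> real"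
  assumes "n \<ge> 1"
    and "\<And>j. j \<in> {1..n} \<Longrightarrow> 0 < alpha j \<and> alpha j < pi"
    and "\<And>j. j \<in> {1..n} \<Longrightarrow> 0 < l j"
    and "\<And>j. j \<in> {1..n} \<Longrightarrow> l j \<le> l' j"
  shows "\<forall>m \<ge> 1. qe n alpha l m \<ge> qe n alpha l' m"
proof -
  have n: "n \<ge> 1" using assms(1) .
  have ang: "\<forall>j\<in>{1..n}. 0 < alpha j \<and> alpha j < pi" using assms(2) by blast
  have lp: "\<forall>j\<in>{1..n}. l j > 0" using assms(3) by blast
  have le: "\<forall>j\<in>{1..n}. l j \<le> l' j" using assms(4) by blast
  have lp': "\<forall>j\<in>{1..n}. l' j > 0" using lp le by force
  have pp: "2*pi > (0::real)" by simp
  have mono: "qe_count n alpha l s \<le> qe_count n alpha l' s" for s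
  proof (cases "s < 0")
    case True then show ?thesis using qe_count_neg by simp
  next
    case False
    then have s: "s \<ge> 0" by simp
    show ?thesis
    proof (cases "exc_vertices n alpha = {}")
      case E: True
      have nx: "\<forall>j\<in>{1..n}. nonexc (alpha j)"
      proof
        fix j assume j: "j \<in> {1..n}"
        then have "\<not> exceptional (alpha j)" using E unfolding exc_vertices_def by auto
        then show "nonexc (alpha j)" using nonexc_iff ang j by blast
      qed
      have h: "\<forall>i\<in>{1..n}. nonexc (alpha i) \<and> l i > 0" "\<forall>i\<in>{1..n}. nonexc (alpha i) \<and> l' i > 0"
        using nx lp lp' by auto
      have g: "good (FT alpha l n)" "good (FT alpha l' n)" using FT_good[OF h(1)] FT_good[OF h(2)] by auto
      have z1: "gmin (FT alpha l n) 0 = gmin (FT alpha l' n) 0" by (rule gmin_eq) (rule FT_zero)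
      have z2: "gmax (FT alpha l n) 0 = gmax (FT alpha l' n) 0" by (rule gmax_eq) (rule FT_zero)
      have m1: "gmin (FT alpha l n) s \<le> gmin (FT alpha l' n) s"
        by (rule gmin_le[OF g]) (rule FT_lmono[OF nx le s])
      have m2: "gmax (FT alpha l n) s \<le> gmax (FT alpha l' n) s"
        by (rule gmax_le[OF g]) (rule FT_lmono[OF nx le s])
      show ?thesis
        unfolding count_nonexc[OF n nx lp E s] count_nonexc[OF n nx lp' E s] qe_mult_zero[of n alpha l l'] z1 z2
        using nat_floor_mono[of "gmin (FT alpha l n) s - 0" "gmin (FT alpha l' n) s - 0" "2*pi"]
          nat_floor_mono[of "gmax (FT alpha l n) s - 0" "gmax (FT alpha l' n) s - 0" "2*pi"] m1 m2 pp
        by (intro add_mono) auto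
    next
      case E: False
      show ?thesis
        unfolding count_exc[OF n ang lp E s] count_exc[OF n ang lp' E s] qe_mult_zero[of n alpha l l']
      proof (intro add_mono order_refl sum_mono)
        fix e assume e: "e \<in> exc_vertices n alpha"
        show "nat (\<lfloor>(FUe n alpha l e s (ph (alpha (prev_exc n alpha e))) - (ph (alpha e) + pi / 2)) / pi\<rfloor> -
               \<lfloor>(FUe n alpha l e 0 (ph (alpha (prev_exc n alpha e))) - (ph (alpha e) + pi / 2)) / pi\<rfloor>)
           \<le> nat (\<lfloor>(FUe n alpha l' e s (ph (alpha (prev_exc n alpha e))) - (ph (alpha e) + pi / 2)) / pi\<rfloor> -
               \<lfloor>(FUe n alpha l' e 0 (ph (alpha (prev_exc n alpha e))) - (ph (alpha e) + pi / 2)) / pi\<rfloor>)"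
          unfolding FUe_zero[of n alpha l e _ l']
          by (rule nat_floor_mono) (use FUe_lmono[OF n e ang lp le s] in auto)
      qed
    qed
  qed
  have unb: "\<exists>s. m \<le> qe_count n alpha l s" for m :: nat
  proof (cases "exc_vertices n alpha = {}")
    case E: True
    have nx: "\<forall>j\<in>{1..n}. nonexc (alpha j)"
    proof
      fix j assume j: "j \<in> {1..n}"
      then have "\<not> exceptional (alpha j)" using E unfolding exc_vertices_def by auto
      then show "nonexc (alpha j)" using nonexc_iff ang j by blast
    qed
    have h: "\<forall>i\<in>{1..n}. nonexc (alpha i) \<and> l i > 0" using nx lp by auto
    have g: "good (FT alpha l n)" using FT_good[OF h] by auto
    define L where "L = (\<Sum>i=1..n. l i)"
    have L: "L > 0" unfolding L_def using lp n by (intro sum_pos) auto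
    obtain s where s: "s \<ge> 0" "\<And>gg. gg \<ge> L * s - real n * pi / 2 \<Longrightarrow>
        m \<le> nat (\<lfloor>gg/(2*pi)\<rfloor> - \<lfloor>(gmin (FT alpha l n) 0 - 0)/(2*pi)\<rfloor>)"
      using unbounded_aux[OF L pp, where D="real n * pi / 2" and K="\<lfloor>(gmin (FT alpha l n) 0 - 0)/(2*pi)\<rfloor>" and m=m] by blast
    have "gmin (FT alpha l n) s \<ge> L * s - real n * pi / 2"
    proof (rule gmin_lower[OF g])
      fix x
      show "L * s - real n * pi / 2 \<le> FT alpha l n s x - x"
        using FT_lower[OF s(1), where al=alpha and l=l and j=n and x=x] unfolding L_def by linarith
    qed
    then have "m \<le> nat (\<lfloor>(gmin (FT alpha l n) s - 0)/(2*pi)\<rfloor> - \<lfloor>(gmin (FT alpha l n) 0 - 0)/(2*pi)\<rfloor>)"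
      using s(2) by simp
    also have "\<dots> \<le> qe_count n alpha l s" unfolding count_nonexc[OF n nx lp E s(1)] by simp
    finally show ?thesis by blast
  next
    case E: False
    then obtain e where e: "e \<in> exc_vertices n alpha" by blast
    have eN: "e \<in> {1..n}" using e unfolding exc_vertices_def by auto
    have L: "l e > 0" using lp eN by blast
    define x0 where "x0 = ph (alpha (prev_exc n alpha e))"
    define c where "c = ph (alpha e) + pi/2"
    define k where "k = prev_dist n alpha e - 1"
    obtain s where s: "s \<ge> 0" "\<And>gg. gg \<ge> l e * s - (c - x0 + real k * pi / 2) \<Longrightarrow>
        m \<le> nat (\<lfloor>gg/pi\<rfloor> - \<lfloor>(FUe n alpha l e 0 x0 - c)/pi\<rfloor>)"
      using unbounded_aux[OF L pi_gt_zero, where D="c - x0 + real k * pi / 2" and K="\<lfloor>(FUe n alpha l e 0 x0 - c)/pi\<rfloor>" and m=m] by blast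
    have "FW alpha l (ixe n e) k s x0 \<ge> x0 - real k * pi / 2"
      unfolding k_def by (rule FW_lower[where al=alpha and ix="ixe n e" and k="prev_dist n alpha e - 1" and l=l, OF FW_hyp[OF n e ang lp] s(1)])
    then have "FUe n alpha l e s x0 - c \<ge> l e * s - (c - x0 + real k * pi / 2)"
      unfolding FUe_def k_def by simp
    then have "m \<le> nat (\<lfloor>(FUe n alpha l e s x0 - c)/pi\<rfloor> - \<lfloor>(FUe n alpha l e 0 x0 - c)/pi\<rfloor>)"
      using s(2) by blast
    also have "\<dots> \<le> (\<Sum>e\<in>exc_vertices n alpha.
      nat (\<lfloor>(FUe n alpha l e s (ph (alpha (prev_exc n alpha e))) - (ph (alpha e) + pi/2))/pi\<rfloor>
         - \<lfloor>(FUe n alpha l e 0 (ph (alpha (prev_exc n alpha e))) - (ph (alpha e) + pi/2))/pi\<rfloor>))"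
      unfolding x0_def c_def by (rule member_le_sum[OF e]) (auto simp: exc_vertices_finite)
    also have "\<dots> \<le> qe_count n alpha l s" unfolding count_exc[OF n ang lp E s(1)] by simp
    finally show ?thesis by blast
  qed
  show ?thesis
  proof (intro allI impI)
    fix m :: nat assume m: "m \<ge> 1"
    define X where "X = {s. m \<le> qe_count n alpha l s}"
    define X' where "X' = {s. m \<le> qe_count n alpha l' s}"
    have sub: "X \<subseteq> X'" unfolding X_def X'_def using mono order_trans by blast
    have ne: "X \<noteq> {}" unfolding X_def using unb[of m] by blast
    have bdd: "bdd_below X'"
    proof (rule bdd_belowI)
      fix s assume "s \<in> X'"
      then have "m \<le> qe_count n alpha l' s" unfolding X'_def by simp
      then show "0 \<le> s" using m qe_count_neg[of s n alpha l'] by (cases "s < 0") auto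
    qed
    have "Inf X' \<le> Inf X" by (rule cInf_superset_mono[OF ne bdd sub])
    then show "qe n alpha l' m \<le> qe n alpha l m" unfolding qe_def X_def X'_def .
  qed
qed

end
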